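(* Let $x_2,\dots,x_{r-1}\in\{0,1\}$ and let $\underline{n}\in S$ be a maximal point of kind $x_2,\dots,x_{r-1}$. Put $x=\sum_{j=2}^{r-1}x_j$. Then for $1\le h\le r$, \[ d^h(\underline{n})=\begin{cases} h, & 1\le h\le x+1,\\ x+1, & x+1\le h\le r.\end{cases} \]
   Context: Setting: $\mathcal{O}$ a one-dimensional Cohen–Macaulay local ring with coefficient field $\mathbb{F}_q$ ($q\ge r$), integral closure $\overline{\mathcal{O}}$ finite over $\mathcal{O}$ with $\overline{\mathcal{O}}=V_1\cap\dots\cap V_r$ for valuation rings with valuations $v_i$ and maximal ideals $\mathfrak{m}_i$ of $\overline{\mathcal{O}}$ of residue degree $1$; $\mathfrak{m}^{\underline{n}}=\mathfrak{m}_1^{n_1}\cdots\mathfrak{m}_r^{n_r}$; $\ell(\underline{n})=\dim_{\mathbb{F}_q}(\mathcal{O}/(\mathcal{O}\cap\mathfrak{m}^{\underline{n}}))$; $S=\{(v_1(z),\dots,v_r(z)): z\in\mathcal{O}\setminus\{0\}\}\subseteq\mathbb{Z}_+^r$ the value semigroup. Let $I=\{1,\dots,r\}$. For $\underline{n}\in\mathbb{Z}_+^r$ and $J\subsetneq I$ nonempty, $\Delta_J(\underline{n})=\{\underline{\beta}\in S:\beta_i=n_i\ \forall i\in J,\ \beta_t>n_t\ \forall t\notin J\}$; write $\Delta_i=\Delta_{\{i\}}$. A maximal point of $S$ is $\underline{n}\in S$ with $\Delta_i(\underline{n})=\emptyset$ for all $i\in I$. Given $x_2,\dots,x_{r-1}\in\{0,1\}$,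 a maximal point $\underline{n}$ is of kind $x_2,\dots,x_{r-1}$ if for each $j\in\{2,\dots,r-1\}$: $x_j=0$ and $\Delta_J(\underline{n})=\emptyset$ for all $J\subsetneq I$ with $\sharp J=j$, or $x_j=1$ and $\Delta_J(\underline{n})\neq\emptyset$ for all $J\subsetneq I$ with $\sharp J=j$. For $1\le h\le r$ let $e_{1,\dots,h}=(1,\dots,1,0,\dots,0)$ ($h$ ones) and $d^h(\underline{n})=\ell(\underline{n}+e_{1,\dots,h})-\ell(\underline{n})$. *)

theory Defs
  imports Main "HOL-Library.Extended_Real"
begin

text \<open>Ambient ring: the type 'a (a commutative ring) plays the role of the total ring
of fractions K of the local ring R0, which is a subset of 'a.\<close>

definition subring :: "'a::comm_ring_1 set \<Rightarrow> bool" where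
  "subring R \<longleftrightarrow> 0 \<in> R \<and> 1 \<in> R \<and> (\<forall>a\<in>R. \<forall>b\<in>R. a + b \<in> R \<and> a * b \<in> R \<and> - a \<in> R)"

definition subfield :: "'a::comm_ring_1 set \<Rightarrow> bool" where
  "subfield F \<longleftrightarrow> subring F \<and> (0::'a) \<noteq> 1 \<and> (\<forall>a\<in>F. a \<noteq> 0 \<longrightarrow> (\<exists>b\<in>F. a * b = 1))"

definition ideal_in :: "'a::comm_ring_1 set \<Rightarrow> 'a set \<Rightarrow> bool" where
  "ideal_in R A \<longleftrightarrow> A \<subseteq> R \<and> 0 \<in> A \<and> (\<forall>a\<in>A. \<forall>b\<in>A. a + b \<in> A)
     \<and> (\<forall>a\<in>A. \<forall>s\<in>R. s * a \<in> A)"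

definition ideal_gen :: "'a::comm_ring_1 set \<Rightarrow> 'a set \<Rightarrow> 'a set" where
  "ideal_gen R G = \<Inter> {C. ideal_in R C \<and> G \<subseteq> C}"

definition noetherian :: "'a::comm_ring_1 set \<Rightarrow> bool" where
  "noetherian R \<longleftrightarrow> (\<forall>A. ideal_in R A \<longrightarrow> (\<exists>G. finite G \<and> G \<subseteq> A \<and> A = ideal_gen R G))"

definition units_in :: "'a::comm_ring_1 set \<Rightarrow> 'a set" where
  "units_in R = {z\<in>R. \<exists>w\<in>R. z * w = 1}"

text \<open>The set of non-units of R; R is local iff this is an ideal (the maximal ideal).\<close>
definition max_ideal :: "'a::comm_ring_1 set \<Rightarrow> 'a set" where
  "max_ideal R = R - units_in R"

definition local_ring :: "'a::comm_ring_1 set \<Rightarrow> bool" where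
  "local_ring R \<longleftrightarrow> subring R \<and> (0::'a) \<noteq> 1 \<and> ideal_in R (max_ideal R)"

definition prime_in :: "'a::comm_ring_1 set \<Rightarrow> 'a set \<Rightarrow> bool" where
  "prime_in R P \<longleftrightarrow> ideal_in R P \<and> P \<noteq> R \<and> (\<forall>a\<in>R. \<forall>b\<in>R. a * b \<in> P \<longrightarrow> a \<in> P \<or> b \<in> P)"

definition krull_dim_one :: "'a::comm_ring_1 set \<Rightarrow> bool" where
  "krull_dim_one R \<longleftrightarrow> (\<exists>P Q. prime_in R P \<and> prime_in R Q \<and> P \<subset> Q)
     \<and> \<not> (\<exists>P Q T. prime_in R P \<and> prime_in R Q \<and> prime_in R T \<and> P \<subset> Q \<and> Q \<subset> T)"

definition nonzerodivisor_in :: "'a::comm_ring_1 set \<Rightarrow> 'a \<Rightarrow> bool" where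
  "nonzerodivisor_in R z \<longleftrightarrow> z \<in> R \<and> (\<forall>y\<in>R. z * y = 0 \<longrightarrow> y = 0)"

text \<open>A one-dimensional (Noetherian) local ring is Cohen--Macaulay iff its depth is
\<open>\<ge> 1\<close>, i.e. iff its maximal ideal contains a regular element (nonzerodivisor).\<close>
definition one_dim_CM_local :: "'a::comm_ring_1 set \<Rightarrow> bool" where
  "one_dim_CM_local R \<longleftrightarrow> local_ring R \<and> noetherian R \<and> krull_dim_one R
     \<and> (\<exists>z\<in>max_ideal R. nonzerodivisor_in R z)"

definition total_ring_of_fractions :: "'a::comm_ring_1 set \<Rightarrow> bool" where
  "total_ring_of_fractions R \<longleftrightarrow>
     (\<forall>z. nonzerodivisor_in R z \<longrightarrow> (\<exists>w. z * w = 1))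
     \<and> (\<forall>k::'a. \<exists>a\<in>R. \<exists>b. nonzerodivisor_in R b \<and> k * b = a)"

text \<open>F is a coefficient field of the local ring R: a subfield of R mapping
isomorphically onto the residue field R/m.\<close>
definition coefficient_field :: "'a::comm_ring_1 set \<Rightarrow> 'a set \<Rightarrow> bool" where
  "coefficient_field R F \<longleftrightarrow> subfield F \<and> F \<subseteq> R
     \<and> (\<forall>z\<in>R. \<exists>c\<in>F. z - c \<in> max_ideal R)"

definition integral_over :: "'a::comm_ring_1 set \<Rightarrow> 'a \<Rightarrow> bool" where
  "integral_over R z \<longleftrightarrow> (\<exists>(d::nat) c. (\<forall>i<d. c i \<in> R) \<and> z ^ d + (\<Sum>i<d. c i * z ^ i) = 0)"

definition int_closure :: "'a::comm_ring_1 set \<Rightarrow> 'a set" where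
  "int_closure R = {z. integral_over R z}"

definition finite_over :: "'a::comm_ring_1 set \<Rightarrow> 'a set \<Rightarrow> bool" where
  "finite_over R B \<longleftrightarrow> (\<exists>G. finite G \<and> G \<subseteq> B \<and>
      (\<forall>z\<in>B. \<exists>a. (\<forall>g\<in>G. a g \<in> R) \<and> z = (\<Sum>g\<in>G. a g * g)))"

definition discrete_valuation :: "('a::comm_ring_1 \<Rightarrow> ereal) \<Rightarrow> bool" where
  "discrete_valuation w \<longleftrightarrow> w 0 = \<infinity> \<and> w 1 = 0
     \<and> (\<forall>x y. w (x * y) = w x + w y)
     \<and> (\<forall>x y. min (w x) (w y) \<le> w (x + y))
     \<and> (\<forall>x. w x = \<infinity> \<or> (\<exists>k::int. w x = ereal (real_of_int k)))
     \<and> (\<exists>x. w x = 1)"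

definition val_ring :: "('a::comm_ring_1 \<Rightarrow> ereal) \<Rightarrow> 'a set" where
  "val_ring w = {z. 0 \<le> w z}"

definition val_max :: "'a::comm_ring_1 set \<Rightarrow> ('a \<Rightarrow> ereal) \<Rightarrow> 'a set" where
  "val_max B w = {z\<in>B. 0 < w z}"

definition ideal_mult :: "'a::comm_ring_1 set \<Rightarrow> 'a set \<Rightarrow> 'a set \<Rightarrow> 'a set" where
  "ideal_mult B P Q = ideal_gen B {a * b | a b. a \<in> P \<and> b \<in> Q}"

fun ideal_pow :: "'a::comm_ring_1 set \<Rightarrow> 'a set \<Rightarrow> nat \<Rightarrow> 'a set" where
  "ideal_pow B P 0 = B"
| "ideal_pow B P (Suc k) = ideal_mult B P (ideal_pow B P k)"

text \<open>\<open>mprod B m k n = m_1^{n_1} \<cdots> m_k^{n_k}\<close> (indices start at 1).\<close>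
fun mprod :: "'a::comm_ring_1 set \<Rightarrow> (nat \<Rightarrow> 'a set) \<Rightarrow> nat \<Rightarrow> (nat \<Rightarrow> nat) \<Rightarrow> 'a set" where
  "mprod B m 0 n = B"
| "mprod B m (Suc k) n = ideal_mult B (ideal_pow B (m (Suc k)) (n (Suc k))) (mprod B m k n)"

text \<open>\<open>dim_F (R / N)\<close> for an additive subgroup N of R: the least number of elements of R
whose residue classes span R/N over F.\<close>
definition quot_dim :: "'a::comm_ring_1 set \<Rightarrow> 'a set \<Rightarrow> 'a set \<Rightarrow> nat" where
  "quot_dim F R N = (LEAST k. \<exists>b::nat \<Rightarrow> 'a. (\<forall>j<k. b j \<in> R) \<and>
      (\<forall>z\<in>R. \<exists>c. (\<forall>j<k. c j \<in> F) \<and> z - (\<Sum>j<k. c j * b j) \<in> N))"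

text \<open>\<open>\<ell>(n) = dim_F (R0 / (R0 \<inter> m^n))\<close> where m_i are the maximal ideals of the
integral closure attached to the valuations v_1..v_r.\<close>
definition ell :: "'a::comm_ring_1 set \<Rightarrow> 'a set \<Rightarrow> nat \<Rightarrow> (nat \<Rightarrow> 'a \<Rightarrow> ereal)
    \<Rightarrow> (nat \<Rightarrow> nat) \<Rightarrow> nat" where
  "ell R0 F r v n = quot_dim F R0 (R0 \<inter> mprod (int_closure R0) (\<lambda>i. val_max (int_closure R0) (v i)) r n)"

text \<open>Elements of \<open>\<int>_+^r\<close> are represented as functions \<open>nat \<Rightarrow> nat\<close>, vanishing outside \<open>{1..r}\<close>.\<close>
definition vecs :: "nat \<Rightarrow> (nat \<Rightarrow> nat) set" where
  "vecs r = {n. \<forall>i. i \<notin> {1..r} \<longrightarrow> n i = 0}"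

definition value_semigroup :: "'a::comm_ring_1 set \<Rightarrow> nat \<Rightarrow> (nat \<Rightarrow> 'a \<Rightarrow> ereal) \<Rightarrow> (nat \<Rightarrow> nat) set" where
  "value_semigroup R0 r v = {n \<in> vecs r. \<exists>z\<in>R0. z \<noteq> 0 \<and> (\<forall>i\<in>{1..r}. v i z = ereal (real (n i)))}"

definition Delta :: "'a::comm_ring_1 set \<Rightarrow> nat \<Rightarrow> (nat \<Rightarrow> 'a \<Rightarrow> ereal) \<Rightarrow> nat set
    \<Rightarrow> (nat \<Rightarrow> nat) \<Rightarrow> (nat \<Rightarrow> nat) set" where
  "Delta R0 r v J n = {\<beta> \<in> value_semigroup R0 r v.
      (\<forall>i\<in>J. \<beta> i = n i) \<and> (\<forall>t\<in>{1..r} - J. n t < \<beta> t)}"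

definition maximal_point :: "'a::comm_ring_1 set \<Rightarrow> nat \<Rightarrow> (nat \<Rightarrow> 'a \<Rightarrow> ereal) \<Rightarrow> (nat \<Rightarrow> nat) \<Rightarrow> bool" where
  "maximal_point R0 r v n \<longleftrightarrow> n \<in> value_semigroup R0 r v \<and> (\<forall>i\<in>{1..r}. Delta R0 r v {i} n = {})"

definition of_kind :: "'a::comm_ring_1 set \<Rightarrow> nat \<Rightarrow> (nat \<Rightarrow> 'a \<Rightarrow> ereal) \<Rightarrow> (nat \<Rightarrow> nat)
    \<Rightarrow> (nat \<Rightarrow> nat) \<Rightarrow> bool" where
  "of_kind R0 r v xs n \<longleftrightarrow> maximal_point R0 r v n \<and>
     (\<forall>j\<in>{2..r-1}.
        (xs j = 0 \<and> (\<forall>J. J \<subset> {1..r} \<and> card J = j \<longrightarrow> Delta R0 r v J n = {}))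
      \<or> (xs j = 1 \<and> (\<forall>J. J \<subset> {1..r} \<and> card J = j \<longrightarrow> Delta R0 r v J n \<noteq> {})))"

definition e_first :: "nat \<Rightarrow> nat \<Rightarrow> nat" where
  "e_first h = (\<lambda>i. if 1 \<le> i \<and> i \<le> h then 1 else 0)"

definition dh :: "'a::comm_ring_1 set \<Rightarrow> 'a set \<Rightarrow> nat \<Rightarrow> (nat \<Rightarrow> 'a \<Rightarrow> ereal)
    \<Rightarrow> nat \<Rightarrow> (nat \<Rightarrow> nat) \<Rightarrow> int" where
  "dh R0 F r v h n = int (ell R0 F r v (\<lambda>i. n i + e_first h i)) - int (ell R0 F r v n)"

end

theory Submission
  imports Defs
begin

locale dval = fixes w :: "'a::comm_ring_1 \<Rightarrow> ereal" assumes dv: "discrete_valuation w"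
begin

lemma w0[simp]: "w 0 = \<infinity>" using dv by (simp add: discrete_valuation_def)
lemma w1[simp]: "w 1 = 0" using dv by (simp add: discrete_valuation_def)
lemma wmult: "w (x * y) = w x + w y" using dv by (simp add: discrete_valuation_def)
lemma wmin: "min (w x) (w y) \<le> w (x + y)" using dv by (simp add: discrete_valuation_def)
lemma wint: "w x = \<infinity> \<or> (\<exists>k::int. w x = ereal (real_of_int k))"
  using dv by (simp add: discrete_valuation_def)
lemma wminf: "w x \<noteq> -\<infinity>" using wint[of x] by auto

lemma w_neg1[simp]: "w (-1) = 0"
proof -
  have "w 1 = w (-1) + w (-1)" using wmult[of "-1" "-1"] by simp
  then have h: "w (-1) + w (-1) = 0" by simp
  show ?thesis using wint[of "-1"] h by auto
qed

lemma w_uminus[simp]: "w (- x) = w x"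
  using wmult[of "-1" x] by simp

lemma w_diff: "min (w x) (w y) \<le> w (x - y)"
  using wmin[of x "-y"] by simp

lemma w_strict: assumes "w x < w y" shows "w (x + y) = w x"
proof -
  have a: "w (x + y) \<ge> w x" using wmin[of x y] assms by simp
  have "min (w (x+y)) (w y) \<le> w x" using w_diff[of "x+y" y] by simp
  then have "w (x+y) \<le> w x" using assms by (auto simp: min_def split: if_splits)
  with a show ?thesis by simp
qed

lemma w_unit: assumes "x * y = 1" shows "w x \<noteq> \<infinity>" "w y = - w x"
proof -
  have h: "w x + w y = 0" using wmult[of x y] assms by simp
  show "w x \<noteq> \<infinity>" using h wint[of y] by auto
  show "w y = - w x" using h wint[of y] wint[of x] by auto
qed

lemma w_pow_fin: assumes "w x = ereal a" shows "w (x ^ k) = ereal (real k * a)"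
proof (induction k)
  case 0 then show ?case by simp
next
  case (Suc k) then show ?case using wmult[of x "x^k"] assms by (simp add: algebra_simps)
qed

lemma w_pow_inf: assumes "w x = \<infinity>" "k > 0" shows "w (x ^ k) = \<infinity>"
proof -
  obtain j where "k = Suc j" using assms(2) by (cases k) auto
  then show ?thesis using wmult[of x "x^j"] assms(1) wminf[of "x^j"] by simp
qed

lemma w_pow_ge: assumes "w x \<ge> 1" shows "w (x ^ k) \<ge> ereal (real k)"
proof (cases "w x")
  case (real a) then show ?thesis using assms w_pow_fin[of x a k]
    by (simp add: mult_le_cancel_left1 )
next
  case PInf then show ?thesis using w_pow_inf[of x k] by (cases "k = 0") auto
next
  case MInf then show ?thesis using wminf by auto
qed

lemma w_int_succ: assumes "ereal (real m) < w x" shows "ereal (real (Suc m)) \<le> w x"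
proof (cases "w x = \<infinity>")
  case False
  then obtain k::int where k: "w x = ereal (real_of_int k)" using wint[of x] by auto
  then have "real_of_int (int m) < real_of_int k" using assms by simp
  then have "int m < k" by linarith
  then have "real (Suc m) \<le> real_of_int k" by linarith
  then show ?thesis using k by simp
qed simp

end

locale setting =
  fixes R0 F :: "'a::comm_ring_1 set" and v :: "nat \<Rightarrow> 'a \<Rightarrow> ereal" and r :: nat
  assumes O_CM: "one_dim_CM_local R0"
    and K_frac: "total_ring_of_fractions R0"
    and coeff: "coefficient_field R0 F"
    and Ffin: "finite F" and q_ge: "r \<le> card F"
    and Ob_finite: "finite_over R0 (int_closure R0)"
    and vals: "\<forall>i\<in>{1..r}. discrete_valuation (v i)"
    and Ob_inter: "int_closure R0 = (\<Inter>i\<in>{1..r}. val_ring (v i))"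
    and distinct_max: "\<forall>i\<in>{1..r}. \<forall>j\<in>{1..r}. i \<noteq> j \<longrightarrow>
                          val_max (int_closure R0) (v i) \<noteq> val_max (int_closure R0) (v j)"
    and res_deg1: "\<forall>i\<in>{1..r}. \<forall>z\<in>int_closure R0. \<exists>c\<in>F. z - c \<in> val_max (int_closure R0) (v i)"
    and r2: "2 \<le> r"
begin

abbreviation "B \<equiv> int_closure R0"

lemma vdv: "i \<in> {1..r} \<Longrightarrow> dval (v i)"
  using vals by (simp add: dval_def)

lemma subR: "subring R0" using O_CM by (simp add: one_dim_CM_local_def local_ring_def)
lemma R0_0[simp]: "0 \<in> R0" using subR by (simp add: subring_def)
lemma R0_1[simp]: "1 \<in> R0" using subR by (simp add: subring_def)
lemma R0_add[simp]: "a \<in> R0 \<Longrightarrow> b \<in> R0 \<Longrightarrow> a + b \<in> R0" using subR by (simp add: subring_def)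
lemma R0_mult[simp]: "a \<in> R0 \<Longrightarrow> b \<in> R0 \<Longrightarrow> a * b \<in> R0" using subR by (simp add: subring_def)
lemma R0_uminus[simp]: "a \<in> R0 \<Longrightarrow> - a \<in> R0" using subR unfolding subring_def by blast
lemma R0_diff[simp]: "a \<in> R0 \<Longrightarrow> b \<in> R0 \<Longrightarrow> a - b \<in> R0"
  using R0_add[of a "-b"] by simp
lemma R0_pow[simp]: "a \<in> R0 \<Longrightarrow> a ^ k \<in> R0" by (induction k) auto
lemma R0_sum: "finite A \<Longrightarrow> (\<And>x. x \<in> A \<Longrightarrow> f x \<in> R0) \<Longrightarrow> sum f A \<in> R0"
  by (induction A rule: finite_induct) auto
lemma R0_prod: "finite A \<Longrightarrow> (\<And>x. x \<in> A \<Longrightarrow> f x \<in> R0) \<Longrightarrow> prod f A \<in> R0"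
  by (induction A rule: finite_induct) auto

lemma zero_ne_one: "(0::'a) \<noteq> 1" using O_CM by (simp add: one_dim_CM_local_def local_ring_def)

lemma subF: "subfield F" using coeff by (simp add: coefficient_field_def)
lemma F_R0: "F \<subseteq> R0" using coeff by (simp add: coefficient_field_def)
lemma F_0[simp]: "0 \<in> F" using subF by (simp add: subfield_def subring_def)
lemma F_1[simp]: "1 \<in> F" using subF by (simp add: subfield_def subring_def)
lemma F_add[simp]: "a \<in> F \<Longrightarrow> b \<in> F \<Longrightarrow> a + b \<in> F" using subF by (simp add: subfield_def subring_def)
lemma F_mult[simp]: "a \<in> F \<Longrightarrow> b \<in> F \<Longrightarrow> a * b \<in> F" using subF by (simp add: subfield_def subring_def)
lemma F_uminus[simp]: "a \<in> F \<Longrightarrow> - a \<in> F" using subF unfolding subfield_def subring_def by blast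
lemma F_diff[simp]: "a \<in> F \<Longrightarrow> b \<in> F \<Longrightarrow> a - b \<in> F"
  using F_add[of a "-b"] by simp
lemma F_inv: "a \<in> F \<Longrightarrow> a \<noteq> 0 \<Longrightarrow> \<exists>b\<in>F. a * b = 1" using subF by (simp add: subfield_def)

lemma R0_B: "R0 \<subseteq> B"
proof
  fix z assume z: "z \<in> R0"
  have "integral_over R0 z"
    unfolding integral_over_def
    by (rule exI[of _ "1::nat"], rule exI[of _ "\<lambda>_. - z"]) (simp add: z)
  then show "z \<in> B" by (simp add: int_closure_def)
qed

lemma inB: "z \<in> B \<longleftrightarrow> (\<forall>i\<in>{1..r}. 0 \<le> v i z)"
  using Ob_inter by (simp add: val_ring_def)

lemma B_ge0: "z \<in> B \<Longrightarrow> i \<in> {1..r} \<Longrightarrow> 0 \<le> v i z" using inB by blast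

lemma R0_ge0: "z \<in> R0 \<Longrightarrow> i \<in> {1..r} \<Longrightarrow> 0 \<le> v i z" using inB R0_B by blast

lemma vF0: assumes "c \<in> F" "c \<noteq> 0" "i \<in> {1..r}" shows "v i c = 0"
proof -
  interpret dval "v i" using vdv assms by simp
  obtain c' where c': "c' \<in> F" "c * c' = 1" using F_inv assms by blast
  have "v i c' = - v i c" using w_unit c' by simp
  moreover have "0 \<le> v i c'" "0 \<le> v i c" using R0_ge0 F_R0 c' assms by auto
  ultimately show ?thesis by (cases "v i c") auto
qed

lemma B_add: "a \<in> B \<Longrightarrow> b \<in> B \<Longrightarrow> a + b \<in> B"
  unfolding inB using dval.wmin[OF vdv] by (metis min_def order_trans)
lemma B_mult: "a \<in> B \<Longrightarrow> b \<in> B \<Longrightarrow> a * b \<in> B"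
  unfolding inB using dval.wmult[OF vdv] by (simp add: add_nonneg_nonneg)
lemma B_uminus: "a \<in> B \<Longrightarrow> - a \<in> B"
  unfolding inB using dval.w_uminus[OF vdv] by simp
lemma B_0: "0 \<in> B" unfolding inB using dval.w0[OF vdv] by simp

end

context setting begin

lemma nzd_inv: "nonzerodivisor_in R0 b \<Longrightarrow> \<exists>w. b * w = 1"
  using K_frac by (simp add: total_ring_of_fractions_def)

lemma frac: "\<exists>a\<in>R0. \<exists>b. nonzerodivisor_in R0 b \<and> k * b = a"
  using K_frac by (simp add: total_ring_of_fractions_def)

lemma nzd_mult: "nonzerodivisor_in R0 x \<Longrightarrow> nonzerodivisor_in R0 y \<Longrightarrow> nonzerodivisor_in R0 (x * y)"
  unfolding nonzerodivisor_in_def by (metis R0_mult mult.assoc)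

lemma nzd_prod: "finite A \<Longrightarrow> (\<And>g. g \<in> A \<Longrightarrow> nonzerodivisor_in R0 (f g)) \<Longrightarrow> nonzerodivisor_in R0 (prod f A)"
proof (induction A rule: finite_induct)
  case empty then show ?case by (simp add: nonzerodivisor_in_def)
next
  case (insert x F) then show ?case by (simp add: nzd_mult)
qed

lemma conductor: "\<exists>d. nonzerodivisor_in R0 d \<and> (\<forall>z\<in>B. d * z \<in> R0)"
proof -
  obtain G where G: "finite G" "G \<subseteq> B" "\<forall>z\<in>B. \<exists>a. (\<forall>g\<in>G. a g \<in> R0) \<and> z = (\<Sum>g\<in>G. a g * g)"
    using Ob_finite by (auto simp: finite_over_def)
  have "\<forall>g. \<exists>b. nonzerodivisor_in R0 b \<and> g * b \<in> R0" using frac by metis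
  then obtain bg where bg: "\<And>g. nonzerodivisor_in R0 (bg g) \<and> g * bg g \<in> R0" by metis
  define d where "d = prod bg G"
  have dn: "nonzerodivisor_in R0 d" unfolding d_def using nzd_prod bg G by blast
  have dg: "d * g \<in> R0" if g: "g \<in> G" for g
  proof -
    have "d = bg g * prod bg (G - {g})" unfolding d_def using G g by (simp add: prod.remove)
    then have "d * g = (g * bg g) * prod bg (G - {g})" by (simp add: algebra_simps)
    moreover have "prod bg (G - {g}) \<in> R0" using R0_prod[of "G - {g}" bg] bg G by (simp add: nonzerodivisor_in_def)
    ultimately show ?thesis using bg by simp
  qed
  have "\<forall>z\<in>B. d * z \<in> R0"
  proof
    fix z assume "z \<in> B"
    then obtain a where a: "\<forall>g\<in>G. a g \<in> R0" "z = (\<Sum>g\<in>G. a g * g)" using G by blast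
    have "d * z = (\<Sum>g\<in>G. a g * (d * g))" unfolding a(2) by (simp add: sum_distrib_left algebra_simps)
    also have "\<dots> \<in> R0" using R0_sum[of G "\<lambda>g. a g * (d * g)"] G a dg by simp
    finally show "d * z \<in> R0" .
  qed
  with dn show ?thesis by blast
qed

lemma max_ideal_ideal: "ideal_in R0 (max_ideal R0)"
  using O_CM by (simp add: one_dim_CM_local_def local_ring_def)

lemma one_notin_max: "1 \<notin> max_ideal R0"
  by (auto simp: max_ideal_def units_in_def)

lemma not_max_unit: "u \<in> R0 \<Longrightarrow> u \<notin> max_ideal R0 \<Longrightarrow> \<exists>w\<in>R0. u * w = 1"
  by (auto simp: max_ideal_def units_in_def)

lemma allinf_zero: assumes inf: "\<forall>i\<in>{1..r}. v i y = \<infinity>" shows "y = 0"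
proof -
  obtain a b where ab: "a \<in> R0" "nonzerodivisor_in R0 b" "y * b = a" using frac by blast
  obtain bi where bi: "b * bi = 1" using nzd_inv ab by blast
  obtain s where s: "s \<in> max_ideal R0" "nonzerodivisor_in R0 s"
    using O_CM by (auto simp: one_dim_CM_local_def)
  obtain si where si: "s * si = 1" using nzd_inv s by blast
  have sR: "s \<in> R0" using s by (simp add: max_ideal_def)
  obtain d where d: "nonzerodivisor_in R0 d" "\<forall>z\<in>B. d * z \<in> R0" using conductor by blast
  have cy: "c * y \<in> B" for c
    unfolding inB using inf dval.wmult[OF vdv] dval.wminf[OF vdv] by simp
  define ak where "ak k = d * a * si ^ k" for k
  have akR: "ak k \<in> R0" for k
  proof -
    have "ak k = d * ((b * si ^ k) * y)" unfolding ak_def using ab(3)[symmetric] by (simp add: algebra_simps)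
    then show ?thesis using d cy by simp
  qed
  have akS: "ak k = s * ak (Suc k)" for k
  proof -
    have "s * ak (Suc k) = ak k * (s * si)" by (simp add: ak_def algebra_simps)
    then show ?thesis using si by simp
  qed
  have akshift: "ak k = s ^ j * ak (k + j)" for k j
  proof (induction j)
    case 0 then show ?case by simp
  next
    case (Suc j) then show ?case using akS[of "k+j"] by (simp add: algebra_simps)
  qed
  define J where "J = {x. \<exists>k t. t \<in> R0 \<and> x = t * ak k}"
  have JR: "J \<subseteq> R0" unfolding J_def using akR by auto
  have J_ideal: "ideal_in R0 J"
    unfolding ideal_in_def
  proof (intro conjI ballI JR)
    show "0 \<in> J" unfolding J_def by (rule CollectI, rule exI[of _ 0], rule exI[of _ 0]) simp
  next
    fix x y assume "x \<in> J" "y \<in> J"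
    then obtain k t k' t' where kt: "t \<in> R0" "x = t * ak k" "t' \<in> R0" "y = t' * ak k'"
      unfolding J_def by blast
    define M where "M = max k k'"
    have "x = (t * s ^ (M - k)) * ak M" using kt akshift[of k "M - k"] unfolding M_def
      by (simp add: mult.assoc)
    moreover have "y = (t' * s ^ (M - k')) * ak M" using kt akshift[of k' "M - k'"] unfolding M_def
      by (simp add: mult.assoc)
    ultimately have "x + y = (t * s ^ (M - k) + t' * s ^ (M - k')) * ak M" by (simp add: algebra_simps)
    moreover have "t * s ^ (M - k) + t' * s ^ (M - k') \<in> R0" using kt sR by simp
    ultimately show "x + y \<in> J" unfolding J_def by blast
  next
    fix x c assume "x \<in> J" "c \<in> R0"
    then obtain k t where kt: "t \<in> R0" "x = t * ak k" unfolding J_def by blast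
    then have "c * x = (c * t) * ak k" by (simp add: mult.assoc)
    moreover have "c * t \<in> R0" using kt \<open>c \<in> R0\<close> by simp
    ultimately show "c * x \<in> J" unfolding J_def by blast
  qed
  obtain G where G: "finite G" "G \<subseteq> J" "J = ideal_gen R0 G"
    using O_CM J_ideal by (auto simp: one_dim_CM_local_def noetherian_def)
  have "\<forall>g\<in>G. \<exists>k t. t \<in> R0 \<and> g = t * ak k" using G unfolding J_def by blast
  then obtain kg tg where ktg: "\<And>g. g \<in> G \<Longrightarrow> tg g \<in> R0 \<and> g = tg g * ak (kg g)" by metis
  define N where "N = sum kg G"
  define P where "P = {x. \<exists>t. t \<in> R0 \<and> x = t * ak N}"
  have P_ideal: "ideal_in R0 P" unfolding ideal_in_def P_def
  proof (intro conjI ballI)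
    show "{x. \<exists>t. t \<in> R0 \<and> x = t * ak N} \<subseteq> R0" using akR by auto
    show "0 \<in> {x. \<exists>t. t \<in> R0 \<and> x = t * ak N}" by (rule CollectI, rule exI[of _ 0]) simp
  next
    fix x y assume "x \<in> {x. \<exists>t. t \<in> R0 \<and> x = t * ak N}" "y \<in> {x. \<exists>t. t \<in> R0 \<and> x = t * ak N}"
    then obtain t t' where "t \<in> R0" "x = t * ak N" "t' \<in> R0" "y = t' * ak N" by blast
    then show "x + y \<in> {x. \<exists>t. t \<in> R0 \<and> x = t * ak N}"
      by (intro CollectI exI[of _ "t + t'"]) (simp add: algebra_simps)
  next
    fix x c assume "x \<in> {x. \<exists>t. t \<in> R0 \<and> x = t * ak N}" "c \<in> R0"
    then obtain t where "t \<in> R0" "x = t * ak N" by blast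
    then show "c * x \<in> {x. \<exists>t. t \<in> R0 \<and> x = t * ak N}" using \<open>c \<in> R0\<close>
      by (intro CollectI exI[of _ "c * t"]) (simp add: algebra_simps)
  qed
  have GP: "G \<subseteq> P"
  proof
    fix g assume g: "g \<in> G"
    have kle: "kg g \<le> N" unfolding N_def using G g by (simp add: member_le_sum)
    have "g = (tg g * s ^ (N - kg g)) * ak N" using ktg[OF g] akshift[of "kg g" "N - kg g"] kle
      by (simp add: mult.assoc)
    moreover have "tg g * s ^ (N - kg g) \<in> R0" using ktg[OF g] sR by simp
    ultimately show "g \<in> P" unfolding P_def by blast
  qed
  have "J \<subseteq> P" unfolding G(3) ideal_gen_def using P_ideal GP by blast
  moreover have "ak (Suc N) \<in> J" unfolding J_def by (rule CollectI, rule exI[of _ "Suc N"], rule exI[of _ 1]) simp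
  ultimately obtain t where t: "t \<in> R0" "ak (Suc N) = t * ak N" unfolding P_def by blast
  have "ak (Suc N) = t * s * ak (Suc N)" using t akS[of N] by (simp add: mult.assoc)
  then have u0: "(1 - t * s) * ak (Suc N) = 0" by (simp add: algebra_simps)
  have tsM: "t * s \<in> max_ideal R0" using max_ideal_ideal s t unfolding ideal_in_def by blast
  have "1 - t * s \<notin> max_ideal R0"
  proof
    assume "1 - t * s \<in> max_ideal R0"
    then have "(1 - t * s) + t * s \<in> max_ideal R0" using tsM max_ideal_ideal unfolding ideal_in_def by blast
    then show False using one_notin_max by simp
  qed
  then obtain w where w: "(1 - t * s) * w = 1" using not_max_unit[of "1 - t*s"] t sR by auto
  have "ak (Suc N) = ((1 - t * s) * w) * ak (Suc N)" using w by simp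
  also have "\<dots> = w * ((1 - t * s) * ak (Suc N))" by (simp add: algebra_simps)
  finally have "ak (Suc N) = w * ((1 - t * s) * ak (Suc N))" .
  then have "ak (Suc N) = 0" using u0 by simp
  then have "ak 0 = 0" using akshift[of 0 "Suc N"] by simp
  then have "d * a = 0" unfolding ak_def by simp
  then have "a = 0" using d(1) ab(1) by (simp add: nonzerodivisor_in_def)
  then have "y * b * bi = 0" using ab by simp
  then show "y = 0" using bi by (simp add: mult.assoc)
qed

lemma fin_inv: assumes "\<forall>i\<in>{1..r}. v i p \<noteq> \<infinity>" shows "\<exists>q. p * q = 1"
proof -
  have nz: "y = 0" if "p * y = 0" for y
  proof (rule allinf_zero, intro ballI)
    fix i assume i: "i \<in> {1..r}"
    have "v i p + v i y = \<infinity>" using dval.wmult[OF vdv[OF i], of p y] that dval.w0[OF vdv[OF i]] by simp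
    then show "v i y = \<infinity>" using assms i dval.wminf[OF vdv[OF i], of p]
      by (cases "v i p"; cases "v i y") auto
  qed
  obtain a b where ab: "a \<in> R0" "nonzerodivisor_in R0 b" "p * b = a" using frac by blast
  have "nonzerodivisor_in R0 a" unfolding nonzerodivisor_in_def
  proof (intro conjI ballI impI ab(1))
    fix t assume "t \<in> R0" "a * t = 0"
    then have "p * (b * t) = 0" using ab(3) by (simp add: mult.assoc[symmetric])
    then have "b * t = 0" using nz by blast
    then show "t = 0" using ab(2) \<open>t \<in> R0\<close> by (simp add: nonzerodivisor_in_def)
  qed
  then obtain aw where "a * aw = 1" using nzd_inv by blast
  then have "p * (b * aw) = 1" using ab(3) by (metis mult.assoc)
  then show ?thesis by blast
qed

end

context setting begin

definition mm :: "nat \<Rightarrow> 'a set" where "mm i = val_max B (v i)"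

lemma mm_iff: "z \<in> mm i \<longleftrightarrow> z \<in> B \<and> 0 < v i z" by (simp add: mm_def val_max_def)

lemma max_sub: assumes ij: "i \<in> {1..r}" "j \<in> {1..r}" and sub: "mm j \<subseteq> mm i" shows "mm i \<subseteq> mm j"
proof
  fix z assume z: "z \<in> mm i"
  then have zB: "z \<in> B" by (simp add: mm_iff)
  obtain c where c: "c \<in> F" "z - c \<in> mm j" using res_deg1 ij(2) zB unfolding mm_def by blast
  have "z - c \<in> mm i" using c sub by blast
  then have "min (v i z) (v i (z - c)) > 0" using z by (simp add: mm_iff)
  then have "0 < v i (z - (z - c))" using dval.w_diff[OF vdv[OF ij(1)], of z "z - c"]
    by (metis order_less_le_trans)
  then have "c = 0" using vF0[OF c(1) _ ij(1)] by fastforce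
  then show "z \<in> mm j" using c by simp
qed

lemma sep: assumes ij: "i \<in> {1..r}" "j \<in> {1..r}" "i \<noteq> j" shows "\<exists>a\<in>B. 1 \<le> v j a \<and> v i a = 0"
proof -
  have "mm i \<noteq> mm j" using distinct_max ij by (simp add: mm_def)
  then have "\<not> mm j \<subseteq> mm i" using max_sub[OF ij(1,2)] by blast
  then obtain a where a: "a \<in> mm j" "a \<notin> mm i" by blast
  then have aB: "a \<in> B" by (simp add: mm_iff)
  have "v i a = 0" using a aB B_ge0[OF aB ij(1)] by (simp add: mm_iff)
  moreover have "ereal (real (Suc 0)) \<le> v j a" using a dval.w_int_succ[OF vdv[OF ij(2)], of 0 a]
    by (simp add: mm_iff zero_ereal_def)
  then have "1 \<le> v j a" by (simp add: one_ereal_def)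
  ultimately show ?thesis using aB by blast
qed

lemma v_prod: assumes i: "i \<in> {1..r}" and fin: "finite A" shows "v i (prod f A) = (\<Sum>x\<in>A. v i (f x))"
  using fin
proof (induction A rule: finite_induct)
  case empty then show ?case using dval.w1[OF vdv[OF i]] by simp
next
  case (insert x A) then show ?case using dval.wmult[OF vdv[OF i]] by simp
qed

lemma v_sum_ge: assumes i: "i \<in> {1..r}" and fin: "finite A" and h: "\<And>x. x \<in> A \<Longrightarrow> c \<le> v i (f x)"
  shows "c \<le> v i (sum f A)"
  using fin h
proof (induction A rule: finite_induct)
  case empty then show ?case using dval.w0[OF vdv[OF i]] by simp
next
  case (insert x A)
  then have "c \<le> min (v i (f x)) (v i (sum f A))" by simp
  also have "\<dots> \<le> v i (f x + sum f A)" using dval.wmin[OF vdv[OF i]] by simp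
  finally show ?case using insert by simp
qed

lemma B_prod: "finite A \<Longrightarrow> (\<And>x. x \<in> A \<Longrightarrow> f x \<in> B) \<Longrightarrow> prod f A \<in> B"
proof (induction A rule: finite_induct)
  case empty then show ?case using R0_B by auto
next
  case (insert x A) then show ?case using B_mult by simp
qed

lemma B_sum: "finite A \<Longrightarrow> (\<And>x. x \<in> A \<Longrightarrow> f x \<in> B) \<Longrightarrow> sum f A \<in> B"
proof (induction A rule: finite_induct)
  case empty then show ?case using B_0 by auto
next
  case (insert x A) then show ?case using B_add by simp
qed

lemma yelem: assumes i: "i \<in> {1..r}" shows "\<exists>y\<in>B. v i y = 0 \<and> (\<forall>j\<in>{1..r}-{i}. 1 \<le> v j y)"
proof -
  have "\<forall>j\<in>{1..r}-{i}. \<exists>a\<in>B. 1 \<le> v j a \<and> v i a = 0" using sep i by auto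
  then obtain a where a: "\<And>j. j \<in> {1..r}-{i} \<Longrightarrow> a j \<in> B \<and> 1 \<le> v j (a j) \<and> v i (a j) = 0" by metis
  define y where "y = prod a ({1..r}-{i})"
  have yB: "y \<in> B" unfolding y_def using B_prod[of "{1..r}-{i}" a] a by auto
  have "v i y = 0" unfolding y_def using v_prod[OF i, of "{1..r}-{i}" a] a by simp
  moreover have "1 \<le> v j y" if j: "j \<in> {1..r}-{i}" for j
  proof -
    have jI: "j \<in> {1..r}" using j by simp
    have "v j y = (\<Sum>k\<in>{1..r}-{i}. v j (a k))" unfolding y_def using v_prod[OF jI, of "{1..r}-{i}" a] by simp
    moreover have "v j (a j) \<le> (\<Sum>k\<in>{1..r}-{i}. v j (a k))"
    proof -
      have e: "(\<Sum>k\<in>{1..r}-{i}. v j (a k)) = v j (a j) + (\<Sum>k\<in>{1..r}-{i}-{j}. v j (a k))"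
        by (rule sum.remove) (use j in auto)
      have "0 \<le> (\<Sum>k\<in>{1..r}-{i}-{j}. v j (a k))"
        by (rule sum_nonneg) (use a B_ge0[OF _ jI] in auto)
      then have "v j (a j) + 0 \<le> v j (a j) + (\<Sum>k\<in>{1..r}-{i}-{j}. v j (a k))"
        by (rule add_left_mono)
      then show ?thesis using e by simp
    qed
    ultimately show ?thesis using a[OF j] by (metis order_trans)
  qed
  ultimately show ?thesis using yB by blast
qed

lemma gelem: assumes i: "i \<in> {1..r}" shows "\<exists>g\<in>B. v i g = 1"
proof -
  obtain x where x: "v i x = 1" using vals i unfolding discrete_valuation_def by blast
  obtain y where y: "y \<in> B" "v i y = 0" "\<forall>j\<in>{1..r}-{i}. 1 \<le> v j y" using yelem[OF i] by blast
  define kk where "kk j = (if v j x = \<infinity> then 0 else nat \<lceil>- real_of_ereal (v j x)\<rceil>)" for j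
  define N where "N = sum kk {1..r}"
  define g where "g = x * y ^ N"
  have "v i g = 1" unfolding g_def using dval.wmult[OF vdv[OF i]] x dval.w_pow_fin[OF vdv[OF i], of y 0 N] y
    by simp
  moreover have "g \<in> B" unfolding inB
  proof
    fix j assume j: "j \<in> {1..r}"
    show "0 \<le> v j g"
    proof (cases "j = i")
      case True then show ?thesis using \<open>v i g = 1\<close> by simp
    next
      case False
      have vy: "ereal (real N) \<le> v j (y ^ N)" using dval.w_pow_ge[OF vdv[OF j]] y j False by simp
      have vg: "v j g = v j x + v j (y ^ N)" unfolding g_def using dval.wmult[OF vdv[OF j]] by simp
      show ?thesis
      proof (cases "v j x = \<infinity>")
        case True then show ?thesis using vg dval.wminf[OF vdv[OF j]] by simp
      next
        case False
        then obtain a where a: "v j x = ereal a" using dval.wminf[OF vdv[OF j], of x] by (cases "v j x") auto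
        have "kk j \<le> N" unfolding N_def by (rule member_le_sum) (use j in auto)
        moreover have "- a \<le> real (kk j)" unfolding kk_def using a by simp linarith
        ultimately have "0 \<le> a + real N" by simp
        then have "0 \<le> ereal a + ereal (real N)" by simp
        also have "\<dots> \<le> ereal a + v j (y ^ N)" by (rule add_left_mono) (rule vy)
        also have "\<dots> = v j x + v j (y ^ N)" using a by simp
        finally show ?thesis using vg by simp
      qed
    qed
  qed
  ultimately show ?thesis by blast
qed

lemma unif: assumes i: "i \<in> {1..r}"
  shows "\<exists>p\<in>B. v i p = 1 \<and> (\<forall>j\<in>{1..r}-{i}. v j p = 0) \<and> (\<exists>q. p * q = 1)"
proof -
  obtain g where g: "g \<in> B" "v i g = 1" using gelem[OF i] by blast
  have "\<forall>j\<in>{1..r}. \<exists>y\<in>B. v j y = 0 \<and> (\<forall>k\<in>{1..r}-{j}. 1 \<le> v k y)" using yelem by blast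
  then obtain y where y: "\<And>j. j \<in> {1..r} \<Longrightarrow> y j \<in> B \<and> v j (y j) = 0 \<and> (\<forall>k\<in>{1..r}-{j}. 1 \<le> v k (y j))"
    by metis
  define z where "z = sum y ({1..r}-{i})"
  have zB: "z \<in> B" unfolding z_def using B_sum[of "{1..r}-{i}" y] y by auto
  have zi: "1 \<le> v i z" unfolding z_def
  proof (rule v_sum_ge[OF i])
    fix x assume x: "x \<in> {1..r}-{i}"
    then have "x \<in> {1..r}" "i \<in> {1..r} - {x}" using i by auto
    then show "1 \<le> v i (y x)" using y by blast
  qed simp
  have zj: "v j z = 0" if j: "j \<in> {1..r}-{i}" for j
  proof -
    have jI: "j \<in> {1..r}" using j by simp
    have "z = y j + sum y ({1..r}-{i}-{j})" unfolding z_def using j by (simp add: sum.remove)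
    moreover have "1 \<le> v j (sum y ({1..r}-{i}-{j}))" by (rule v_sum_ge[OF jI]) (use y jI in auto)
    moreover have "(0::ereal) < v j (sum y ({1..r}-{i}-{j}))"
      using order_less_le_trans[OF _ calculation(2), of 0] by simp
    moreover have "v j (y j) < v j (sum y ({1..r}-{i}-{j}))" using y[OF jI] calculation(3) by simp
    ultimately show ?thesis using dval.w_strict[OF vdv[OF jI], of "y j" "sum y ({1..r}-{i}-{j})"] y[OF jI]
      by simp
  qed
  define p where "p = g * y i + z * z"
  have vgy: "v i (g * y i) = 1" using dval.wmult[OF vdv[OF i]] g y[OF i] by simp
  have vzz: "2 \<le> v i (z * z)"
  proof -
    have "v i (z * z) = v i z + v i z" using dval.wmult[OF vdv[OF i]] by simp
    moreover have "(1::ereal) + 1 \<le> v i z + v i z" using zi by (intro add_mono) auto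
    ultimately show ?thesis by simp
  qed
  have "(1::ereal) < v i (z * z)" using order_less_le_trans[OF _ vzz, of 1] by simp
  then have pi: "v i p = 1" unfolding p_def
    using dval.w_strict[OF vdv[OF i], of "g * y i" "z * z"] vgy by simp
  have pj: "v j p = 0" if j: "j \<in> {1..r}-{i}" for j
  proof -
    have jI: "j \<in> {1..r}" using j by simp
    have "v j (z * z) = 0" using dval.wmult[OF vdv[OF jI]] zj[OF j] by simp
    moreover have "1 \<le> v j (g * y i)"
    proof -
      have "v j (g * y i) = v j g + v j (y i)" using dval.wmult[OF vdv[OF jI]] by simp
      moreover have "0 + 1 \<le> v j g + v j (y i)" using B_ge0[OF g(1) jI] y[OF i] j by (intro add_mono) auto
      ultimately show ?thesis by simp
    qed
    moreover have "(0::ereal) < v j (g * y i)" using order_less_le_trans[OF _ calculation(2), of 0] by simp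
    ultimately show ?thesis unfolding p_def
      using dval.w_strict[OF vdv[OF jI], of "z * z" "g * y i"] by (simp add: add.commute)
  qed
  have pB: "p \<in> B" unfolding p_def using g y[OF i] zB B_add B_mult by simp
  have "\<forall>j\<in>{1..r}. v j p \<noteq> \<infinity>"
  proof
    fix j assume "j \<in> {1..r}"
    then show "v j p \<noteq> \<infinity>" using pi pj[of j] by (cases "j = i") auto
  qed
  then have "\<exists>q. p * q = 1" using fin_inv by blast
  then show ?thesis using pB pi pj by blast
qed

end

lemma ideal_gen_sub: "ideal_in R C \<Longrightarrow> G \<subseteq> C \<Longrightarrow> ideal_gen R G \<subseteq> C"
  unfolding ideal_gen_def by blast

lemma gen_in: "G \<subseteq> ideal_gen R G"
  unfolding ideal_gen_def by blast

lemma mult_in_ideal_mult: "a \<in> P \<Longrightarrow> b \<in> Q \<Longrightarrow> a * b \<in> ideal_mult R P Q"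
  unfolding ideal_mult_def by (rule subsetD[OF gen_in]) blast

context setting begin

definition W :: "(nat \<Rightarrow> nat) \<Rightarrow> 'a set" where
  "W n = {z \<in> R0. \<forall>i\<in>{1..r}. ereal (real (n i)) \<le> v i z}"

definition VB :: "nat \<Rightarrow> (nat \<Rightarrow> nat) \<Rightarrow> 'a set" where
  "VB k n = {z \<in> B. \<forall>i\<in>{1..k}. ereal (real (n i)) \<le> v i z}"

lemma VB_ideal: assumes k: "k \<le> r" shows "ideal_in B (VB k n)"
  unfolding ideal_in_def
proof (intro conjI ballI)
  show "VB k n \<subseteq> B" unfolding VB_def by blast
  show "0 \<in> VB k n" unfolding VB_def using B_0 dval.w0[OF vdv] k by auto
next
  fix a b assume a: "a \<in> VB k n" and b: "b \<in> VB k n"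
  show "a + b \<in> VB k n" unfolding VB_def
  proof (intro CollectI conjI ballI)
    show "a + b \<in> B" using a b B_add unfolding VB_def by blast
  next
    fix i assume i: "i \<in> {1..k}"
    then have iI: "i \<in> {1..r}" using k by auto
    have "ereal (real (n i)) \<le> min (v i a) (v i b)" using a b i unfolding VB_def by simp
    also have "\<dots> \<le> v i (a + b)" using dval.wmin[OF vdv[OF iI]] by simp
    finally show "ereal (real (n i)) \<le> v i (a + b)" .
  qed
next
  fix a s assume a: "a \<in> VB k n" and s: "s \<in> B"
  show "s * a \<in> VB k n" unfolding VB_def
  proof (intro CollectI conjI ballI)
    show "s * a \<in> B" using a s B_mult unfolding VB_def by blast
  next
    fix i assume i: "i \<in> {1..k}"
    then have iI: "i \<in> {1..r}" using k by auto
    have "0 + ereal (real (n i)) \<le> v i s + v i a" using a i B_ge0[OF s iI] unfolding VB_def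
      by (intro add_mono) auto
    then show "ereal (real (n i)) \<le> v i (s * a)" using dval.wmult[OF vdv[OF iI]] by simp
  qed
qed

lemma VB_ideal1: assumes i: "i \<in> {1..r}" shows "ideal_in B {z \<in> B. ereal (real k) \<le> v i z}"
  unfolding ideal_in_def
proof (intro conjI ballI)
  show "{z \<in> B. ereal (real k) \<le> v i z} \<subseteq> B" by blast
  show "0 \<in> {z \<in> B. ereal (real k) \<le> v i z}" using B_0 dval.w0[OF vdv[OF i]] by auto
next
  fix a b assume a: "a \<in> {z \<in> B. ereal (real k) \<le> v i z}" and b: "b \<in> {z \<in> B. ereal (real k) \<le> v i z}"
  have "ereal (real k) \<le> min (v i a) (v i b)" using a b by simp
  also have "\<dots> \<le> v i (a + b)" using dval.wmin[OF vdv[OF i]] by simp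
  finally show "a + b \<in> {z \<in> B. ereal (real k) \<le> v i z}" using a b B_add by blast
next
  fix a s assume a: "a \<in> {z \<in> B. ereal (real k) \<le> v i z}" and s: "s \<in> B"
  have "0 + ereal (real k) \<le> v i s + v i a" using a B_ge0[OF s i] by (intro add_mono) auto
  then show "s * a \<in> {z \<in> B. ereal (real k) \<le> v i z}" using dval.wmult[OF vdv[OF i]] a s B_mult by simp
qed

lemma pow_sub: assumes i: "i \<in> {1..r}" shows "ideal_pow B (mm i) k \<subseteq> {z \<in> B. ereal (real k) \<le> v i z}"
proof (induction k)
  case 0 then show ?case using B_ge0[OF _ i] by (auto simp: zero_ereal_def[symmetric])
next
  case (Suc k)
  show ?case unfolding ideal_pow.simps ideal_mult_def
  proof (rule ideal_gen_sub[OF VB_ideal1[OF i]])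
    show "{a * b |a b. a \<in> mm i \<and> b \<in> ideal_pow B (mm i) k} \<subseteq> {z \<in> B. ereal (real (Suc k)) \<le> v i z}"
    proof
      fix x assume "x \<in> {a * b |a b. a \<in> mm i \<and> b \<in> ideal_pow B (mm i) k}"
      then obtain a b where ab: "x = a * b" "a \<in> mm i" "b \<in> ideal_pow B (mm i) k" by blast
      have a1: "ereal (real (Suc 0)) \<le> v i a" using ab(2) dval.w_int_succ[OF vdv[OF i], of 0 a]
        by (simp add: mm_iff zero_ereal_def)
      have bk: "b \<in> B" "ereal (real k) \<le> v i b" using ab(3) Suc by auto
      have "ereal (real (Suc 0)) + ereal (real k) \<le> v i a + v i b" using a1 bk by (intro add_mono)
      then have "ereal (real (Suc k)) \<le> v i x" using dval.wmult[OF vdv[OF i]] ab(1) by simp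
      moreover have "x \<in> B" using ab bk B_mult by (simp add: mm_iff)
      ultimately show "x \<in> {z \<in> B. ereal (real (Suc k)) \<le> v i z}" by simp
    qed
  qed
qed

lemma mprod_sub: "k \<le> r \<Longrightarrow> mprod B mm k n \<subseteq> VB k n"
proof (induction k)
  case 0 then show ?case by (simp add: VB_def)
next
  case (Suc k)
  have iI: "Suc k \<in> {1..r}" using Suc by simp
  show ?case unfolding mprod.simps ideal_mult_def
  proof (rule ideal_gen_sub[OF VB_ideal[OF Suc(2)]])
    show "{a * b |a b. a \<in> ideal_pow B (mm (Suc k)) (n (Suc k)) \<and> b \<in> mprod B mm k n} \<subseteq> VB (Suc k) n"
    proof
      fix x assume "x \<in> {a * b |a b. a \<in> ideal_pow B (mm (Suc k)) (n (Suc k)) \<and> b \<in> mprod B mm k n}"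
      then obtain a b where ab: "x = a * b" "a \<in> ideal_pow B (mm (Suc k)) (n (Suc k))" "b \<in> mprod B mm k n" by blast
      have a: "a \<in> B" "ereal (real (n (Suc k))) \<le> v (Suc k) a" using pow_sub[OF iI] ab(2) by auto
      have b: "b \<in> B" "\<forall>i\<in>{1..k}. ereal (real (n i)) \<le> v i b" using Suc ab(3) unfolding VB_def by auto
      show "x \<in> VB (Suc k) n" unfolding VB_def
      proof (intro CollectI conjI ballI)
        show "x \<in> B" using a b ab B_mult by simp
      next
        fix i assume i: "i \<in> {1..Suc k}"
        then have iI': "i \<in> {1..r}" using Suc by auto
        have "v i x = v i a + v i b" using ab dval.wmult[OF vdv[OF iI']] by simp
        show "ereal (real (n i)) \<le> v i x"
        proof (cases "i = Suc k")
          case True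
          have "ereal (real (n i)) + 0 \<le> v i a + v i b" using a B_ge0[OF b(1) iI'] True by (intro add_mono) auto
          then show ?thesis using \<open>v i x = v i a + v i b\<close> by simp
        next
          case False
          then have "i \<in> {1..k}" using i by auto
          then have "0 + ereal (real (n i)) \<le> v i a + v i b" using b B_ge0[OF a(1) iI'] by (intro add_mono) auto
          then show ?thesis using \<open>v i x = v i a + v i b\<close> by simp
        qed
      qed
    qed
  qed
qed

lemma pow_in: "p \<in> P \<Longrightarrow> u \<in> B \<Longrightarrow> p ^ k * u \<in> ideal_pow B P k"
proof (induction k arbitrary: u)
  case 0 then show ?case by simp
next
  case (Suc k)
  have "p ^ Suc k * u = p * (p ^ k * u)" by (simp add: algebra_simps)
  then show ?case using Suc mult_in_ideal_mult[of p P "p ^ k * u" "ideal_pow B P k" B]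
    by (simp del: power_Suc)
qed

end

context setting begin

lemma PP_in: "k \<le> r \<Longrightarrow> (\<forall>i\<in>{1..k}. pp i \<in> mm i) \<Longrightarrow> u \<in> B \<Longrightarrow>
   (\<Prod>i\<in>{1..k}. pp i ^ n i) * u \<in> mprod B mm k n"
proof (induction k arbitrary: u)
  case 0 then show ?case by simp
next
  case (Suc k)
  have e: "(\<Prod>i\<in>{1..Suc k}. pp i ^ n i) * u = pp (Suc k) ^ n (Suc k) * ((\<Prod>i\<in>{1..k}. pp i ^ n i) * u)"
    by (simp add: prod.cl_ivl_Suc algebra_simps)
  have a: "pp (Suc k) ^ n (Suc k) * 1 \<in> ideal_pow B (mm (Suc k)) (n (Suc k))"
    by (rule pow_in) (use Suc.prems R0_B in auto)
  have b: "(\<Prod>i\<in>{1..k}. pp i ^ n i) * u \<in> mprod B mm k n" using Suc by auto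
  show ?case unfolding e mprod.simps using mult_in_ideal_mult[OF _ b] a by simp
qed

lemma ereal_ge_shift: "ereal (real m) \<le> x \<Longrightarrow> 0 \<le> x + ereal (- real m)"
  by (cases x) auto

lemma mprod_sup: assumes k: "k \<le> r" and z: "z \<in> VB k n" shows "z \<in> mprod B mm k n"
proof -
  have "\<forall>i\<in>{1..r}. \<exists>p\<in>B. v i p = 1 \<and> (\<forall>j\<in>{1..r}-{i}. v j p = 0) \<and> (\<exists>q. p * q = 1)" using unif by blast
  then obtain pp pinv where pp: "\<And>i. i \<in> {1..r} \<Longrightarrow> pp i \<in> B \<and> v i (pp i) = 1 \<and> (\<forall>j\<in>{1..r}-{i}. v j (pp i) = 0) \<and> pp i * pinv i = 1"
    by metis
  define Q where "Q = (\<Prod>i\<in>{1..k}. pinv i ^ n i)"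
  define u where "u = z * Q"
  have PQ: "(\<Prod>i\<in>{1..k}. pp i ^ n i) * Q = 1"
  proof -
    have "(\<Prod>i\<in>{1..k}. pp i ^ n i) * Q = (\<Prod>i\<in>{1..k}. (pp i * pinv i) ^ n i)"
      unfolding Q_def by (simp add: prod.distrib[symmetric] power_mult_distrib)
    also have "\<dots> = 1" using pp k by (intro prod.neutral) auto
    finally show ?thesis .
  qed
  have zB: "z \<in> B" using z by (simp add: VB_def)
  have uB: "u \<in> B" unfolding inB
  proof
    fix j assume j: "j \<in> {1..r}"
    have vpinv: "v j (pinv i ^ n i) = ereal (real (n i) * (if i = j then -1 else 0))" if i: "i \<in> {1..k}" for i
    proof -
      have iI: "i \<in> {1..r}" using i k by auto
      have "v j (pinv i) = - v j (pp i)" using dval.w_unit(2)[OF vdv[OF j]] pp[OF iI] by blast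
      then have "v j (pinv i) = ereal (if i = j then -1 else 0)" using pp[OF iI] j by (auto simp: one_ereal_def)
      then show ?thesis using dval.w_pow_fin[OF vdv[OF j]] by blast
    qed
    have "v j Q = (\<Sum>i\<in>{1..k}. v j (pinv i ^ n i))" unfolding Q_def using v_prod[OF j, of "{1..k}" "\<lambda>i. pinv i ^ n i"] by simp
    also have "\<dots> = (\<Sum>i\<in>{1..k}. ereal (real (n i) * (if i = j then -1 else 0)))"
      using vpinv by (intro sum.cong) auto
    also have "\<dots> = ereal (\<Sum>i\<in>{1..k}. real (n i) * (if i = j then -1 else 0))" by (simp add: sum_ereal)
    also have "(\<Sum>i\<in>{1..k}. real (n i) * (if i = j then -1 else 0)) = (if j \<in> {1..k} then - real (n j) else 0)"
      by (simp add: if_distrib[of "\<lambda>x. real (n _) * x"] sum.delta cong: if_cong)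
    finally have vQ: "v j Q = ereal (if j \<in> {1..k} then - real (n j) else 0)" .
    have vu: "v j u = v j z + v j Q" unfolding u_def using dval.wmult[OF vdv[OF j]] by simp
    show "0 \<le> v j u"
    proof (cases "j \<in> {1..k}")
      case True
      then have "ereal (real (n j)) \<le> v j z" using z by (simp add: VB_def)
      then show ?thesis using vu vQ True ereal_ge_shift by simp
    next
      case False
      have "v j Q = ereal 0" using vQ by (simp only: if_not_P[OF False])
      then have "v j Q = 0" by (simp add: zero_ereal_def)
      then show ?thesis using vu B_ge0[OF zB j] by simp
    qed
  qed
  have "z = (\<Prod>i\<in>{1..k}. pp i ^ n i) * u" unfolding u_def using PQ
    by (metis mult.left_commute mult.right_neutral)
  moreover have "(\<Prod>i\<in>{1..k}. pp i ^ n i) * u \<in> mprod B mm k n"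
    by (rule PP_in[OF k _ uB]) (use pp k in \<open>auto simp: mm_iff\<close>)
  ultimately show ?thesis by simp
qed

lemma W_eq: "R0 \<inter> mprod B mm r n = W n"
proof -
  have "mprod B mm r n = VB r n" using mprod_sub[of r n] mprod_sup[of r _ n] by blast
  then show ?thesis unfolding VB_def W_def using R0_B by auto
qed

lemma ell_W: "ell R0 F r v n = quot_dim F R0 (W n)"
proof -
  have "(\<lambda>i. val_max B (v i)) = mm" by (rule ext) (simp add: mm_def)
  then show ?thesis unfolding ell_def using W_eq by simp
qed

end

definition spans :: "'a::comm_ring_1 set \<Rightarrow> 'a set \<Rightarrow> 'a set \<Rightarrow> nat \<Rightarrow> (nat \<Rightarrow> 'a) \<Rightarrow> bool" where
  "spans F R N k b \<longleftrightarrow> (\<forall>j<k. b j \<in> R) \<and>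
      (\<forall>z\<in>R. \<exists>c. (\<forall>j<k. c j \<in> F) \<and> z - (\<Sum>j<k. c j * b j) \<in> N)"

lemma quot_dim_spans: "quot_dim F R N = (LEAST k. \<exists>b. spans F R N k b)"
  unfolding quot_dim_def spans_def by simp

definition subsp :: "'a::comm_ring_1 set \<Rightarrow> 'a set \<Rightarrow> bool" where
  "subsp F N \<longleftrightarrow> 0 \<in> N \<and> (\<forall>a\<in>N. \<forall>b\<in>N. a + b \<in> N) \<and> (\<forall>c\<in>F. \<forall>a\<in>N. c * a \<in> N)"

lemma spans_mono: "spans F R N k b \<Longrightarrow> N \<subseteq> N2 \<Longrightarrow> spans F R N2 k b"
  unfolding spans_def by blast

lemma spans_ext:
  assumes sp: "spans F R N k b" and z: "z \<in> R" and h: "\<forall>w\<in>N. \<exists>c\<in>F. w - c * z \<in> N'"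
  shows "spans F R N' (Suc k) (b(k := z))"
  unfolding spans_def
proof (intro conjI allI impI ballI)
  fix j assume "j < Suc k" then show "(b(k := z)) j \<in> R" using sp z unfolding spans_def by auto
next
  fix z0 assume z0: "z0 \<in> R"
  obtain c where c: "\<forall>j<k. c j \<in> F" "z0 - (\<Sum>j<k. c j * b j) \<in> N" using sp z0 unfolding spans_def by blast
  obtain c' where c': "c' \<in> F" "z0 - (\<Sum>j<k. c j * b j) - c' * z \<in> N'" using h c by blast
  have "(\<Sum>j<Suc k. (c(k := c')) j * (b(k := z)) j) = (\<Sum>j<k. c j * b j) + c' * z"
    by (simp add: sum.lessThan_Suc)
  then have "z0 - (\<Sum>j<Suc k. (c(k := c')) j * (b(k := z)) j) \<in> N'" using c'(2) by (simp only: diff_diff_eq)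
  moreover have "\<forall>j<Suc k. (c(k := c')) j \<in> F" using c c' by auto
  ultimately show "\<exists>c. (\<forall>j<Suc k. c j \<in> F) \<and> z0 - (\<Sum>j<Suc k. c j * (b(k := z)) j) \<in> N'"
    by (intro exI[of _ "c(k := c')"] conjI)
qed

definition sw :: "nat \<Rightarrow> nat \<Rightarrow> nat \<Rightarrow> nat" where
  "sw a b j = (if j = a then b else if j = b then a else j)"

lemma sum_sw: assumes "a < k" "b < k" shows "(\<Sum>j<k. f (sw a b j)) = (\<Sum>j<k. f j)"
  by (rule sum.reindex_bij_witness[where i = "sw a b" and j = "sw a b"]) (use assms in \<open>auto simp: sw_def\<close>)

lemma spans_sw: assumes sp: "spans F R N k b" and ab: "a < k" "b' < k"
  shows "spans F R N k (b \<circ> sw a b')"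
  unfolding spans_def
proof (intro conjI allI impI ballI)
  fix j assume "j < k" then show "(b \<circ> sw a b') j \<in> R" using sp ab unfolding spans_def sw_def by auto
next
  fix z assume z: "z \<in> R"
  obtain c where c: "\<forall>j<k. c j \<in> F" "z - (\<Sum>j<k. c j * b j) \<in> N" using sp z unfolding spans_def by blast
  have "(\<Sum>j<k. (c \<circ> sw a b') j * (b \<circ> sw a b') j) = (\<Sum>j<k. c j * b j)"
    using sum_sw[OF ab, of "\<lambda>j. c j * b j"] by simp
  moreover have "\<forall>j<k. (c \<circ> sw a b') j \<in> F" using c ab by (auto simp: sw_def)
  ultimately show "\<exists>c. (\<forall>j<k. c j \<in> F) \<and> z - (\<Sum>j<k. c j * (b \<circ> sw a b') j) \<in> N" using c by metis
qed

lemma F_facts: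
  assumes "subfield F"
  shows "0 \<in> F" "1 \<in> F" "\<And>a b. a \<in> F \<Longrightarrow> b \<in> F \<Longrightarrow> a + b \<in> F" "\<And>a b. a \<in> F \<Longrightarrow> b \<in> F \<Longrightarrow> a * b \<in> F"
    "\<And>a. a \<in> F \<Longrightarrow> - a \<in> F" "\<And>a. a \<in> F \<Longrightarrow> a \<noteq> 0 \<Longrightarrow> \<exists>b\<in>F. a * b = 1"
  using assms unfolding subfield_def subring_def by blast+

lemma subsp_neg: "subfield F \<Longrightarrow> subsp F N \<Longrightarrow> a \<in> N \<Longrightarrow> - a \<in> N"
  using F_facts(2,5)[of F] unfolding subsp_def by (metis mult_minus1)

lemma subsp_diff: "subfield F \<Longrightarrow> subsp F N \<Longrightarrow> a \<in> N \<Longrightarrow> b \<in> N \<Longrightarrow> a - b \<in> N"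
  using subsp_neg[of F N b] unfolding subsp_def by (metis diff_conv_add_uminus)

lemma spans_drop:
  assumes F: "subfield F" and N: "subsp F N" and sp: "spans F R N (Suc K) b"
    and c: "\<forall>j<Suc K. c j \<in> F" and cK: "c K \<noteq> 0" and cN: "(\<Sum>j<Suc K. c j * b j) \<in> N"
  shows "spans F R N K b"
  unfolding spans_def
proof (intro conjI allI impI ballI)
  fix j assume "j < K" then show "b j \<in> R" using sp unfolding spans_def by auto
next
  fix z assume z: "z \<in> R"
  obtain d where d: "\<forall>j<Suc K. d j \<in> F" "z - (\<Sum>j<Suc K. d j * b j) \<in> N" using sp z unfolding spans_def by blast
  obtain e where e: "e \<in> F" "c K * e = 1" using F_facts(6)[OF F] c cK by blast
  define d' where "d' j = d j - d K * e * c j" for j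
  have dK: "d K * e \<in> F" using F_facts(4)[OF F] d e by simp
  have "(d K * e) * (\<Sum>j<Suc K. c j * b j) \<in> N" using N dK cN unfolding subsp_def by blast
  then have mem: "(z - (\<Sum>j<Suc K. d j * b j)) + (d K * e) * (\<Sum>j<Suc K. c j * b j) \<in> N"
    using N d unfolding subsp_def by blast
  have D': "(\<Sum>j<K. d' j * b j) = (\<Sum>j<K. d j * b j) - (d K * e) * (\<Sum>j<K. c j * b j)"
    unfolding d'_def by (simp add: sum_subtractf sum_distrib_left algebra_simps)
  have s3: "(d K * e) * (c K * b K) = d K * b K"
  proof -
    have "(d K * e) * (c K * b K) = d K * b K * (c K * e)" by (simp add: ac_simps)
    then show ?thesis using e by simp
  qed
  have "z - (\<Sum>j<K. d' j * b j) = (z - ((\<Sum>j<K. d j * b j) + d K * b K)) + ((d K * e) * (\<Sum>j<K. c j * b j) + d K * b K)"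
    using D' by (simp add: algebra_simps)
  also have "\<dots> = (z - (\<Sum>j<Suc K. d j * b j)) + (d K * e) * (\<Sum>j<Suc K. c j * b j)"
    using s3 by (simp add: sum.lessThan_Suc distrib_left)
  finally have eqz: "z - (\<Sum>j<K. d' j * b j) = (z - (\<Sum>j<Suc K. d j * b j)) + (d K * e) * (\<Sum>j<Suc K. c j * b j)" .
  have "z - (\<Sum>j<K. d' j * b j) \<in> N" unfolding eqz by (rule mem)
  moreover have "\<forall>j<K. d' j \<in> F"
  proof (intro allI impI)
    fix j assume "j < K"
    then have j1: "d j \<in> F" "c j \<in> F" using d c by auto
    then have "d K * e * c j \<in> F" using F_facts(4)[OF F] dK by blast
    then have "d j + - (d K * e * c j) \<in> F" using F_facts(3,5)[OF F] j1 by blast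
    then show "d' j \<in> F" unfolding d'_def by simp
  qed
  ultimately show "\<exists>c. (\<forall>j<K. c j \<in> F) \<and> z - (\<Sum>j<K. c j * b j) \<in> N" by blast
qed

lemma spans_indep:
  assumes F: "subfield F" and N: "subsp F N" and sp: "spans F R N k b" and k: "quot_dim F R N = k"
    and c: "\<forall>j<k. c j \<in> F" and cN: "(\<Sum>j<k. c j * b j) \<in> N"
  shows "\<forall>j<k. c j = 0"
proof (rule ccontr)
  assume "\<not> (\<forall>j<k. c j = 0)"
  then obtain m where m: "m < k" "c m \<noteq> 0" by blast
  then obtain K where K: "k = Suc K" by (cases k) auto
  have mK: "m < Suc K" "K < Suc K" using m K by auto
  have sp2: "spans F R N (Suc K) (b \<circ> sw m K)" using spans_sw[OF sp[unfolded K] mK] .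
  have c2: "\<forall>j<Suc K. (c \<circ> sw m K) j \<in> F" using c K m by (auto simp: sw_def)
  have c2K: "(c \<circ> sw m K) K \<noteq> 0" using m by (simp add: sw_def)
  have "(\<Sum>j<Suc K. (c \<circ> sw m K) j * (b \<circ> sw m K) j) = (\<Sum>j<Suc K. c j * b j)"
    using sum_sw[OF mK, of "\<lambda>j. c j * b j"] by simp
  then have c2N: "(\<Sum>j<Suc K. (c \<circ> sw m K) j * (b \<circ> sw m K) j) \<in> N" using cN K by simp
  have "spans F R N K (b \<circ> sw m K)" by (rule spans_drop[OF F N sp2 c2 c2K c2N])
  then have "quot_dim F R N \<le> K" unfolding quot_dim_spans by (auto intro: Least_le)
  then show False using k K by simp
qed

lemma quot_dim_step:
  assumes F: "subfield F" and N: "subsp F N" and N': "subsp F N'" and sub: "N' \<subseteq> N" and NR: "N \<subseteq> R"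
    and z: "z \<in> N" "z \<notin> N'" and h: "\<forall>w\<in>N. \<exists>c\<in>F. w - c * z \<in> N'" and ex: "\<exists>k b. spans F R N k b"
  shows "quot_dim F R N' = Suc (quot_dim F R N)"
proof -
  define k where "k = quot_dim F R N"
  have "\<exists>b. spans F R N k b" unfolding k_def quot_dim_spans by (rule LeastI_ex) (use ex in blast)
  then obtain b0 where b0: "spans F R N k b0" by blast
  have zR: "z \<in> R" using z NR by blast
  have "spans F R N' (Suc k) (b0(k := z))" by (rule spans_ext[OF b0 zR h])
  then have le: "quot_dim F R N' \<le> Suc k" unfolding quot_dim_spans by (auto intro: Least_le)
  define k' where "k' = quot_dim F R N'"
  have "\<exists>k b. spans F R N' k b" using \<open>spans F R N' (Suc k) (b0(k := z))\<close> by blast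
  then have "\<exists>b. spans F R N' k' b" unfolding k'_def quot_dim_spans by (rule LeastI_ex)
  then obtain b where b: "spans F R N' k' b" by blast
  have bN: "spans F R N k' b" using spans_mono[OF b sub] .
  then have ge: "k \<le> k'" unfolding k_def quot_dim_spans by (auto intro: Least_le)
  have "k' \<noteq> k"
  proof
    assume kk: "k' = k"
    obtain c where c: "\<forall>j<k'. c j \<in> F" "z - (\<Sum>j<k'. c j * b j) \<in> N'" using b zR unfolding spans_def by blast
    have "z - (z - (\<Sum>j<k'. c j * b j)) \<in> N" using subsp_diff[OF F N] z c sub by blast
    then have sN: "(\<Sum>j<k'. c j * b j) \<in> N" by simp
    have "\<forall>j<k'. c j = 0" by (rule spans_indep[OF F N bN _ c(1) sN]) (simp add: kk k_def)
    then have "(\<Sum>j<k'. c j * b j) = 0" by simp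
    then show False using c z by simp
  qed
  then show ?thesis using le ge unfolding k_def k'_def by simp
qed

lemma spans_ex_step:
  assumes "spans F R N k b" "z \<in> R" "\<forall>w\<in>N. \<exists>c\<in>F. w - c * z \<in> N'"
  shows "\<exists>k b. spans F R N' k b"
  using spans_ext[OF assms] by blast

context setting begin

lemma W_R0: "W n \<subseteq> R0" unfolding W_def by blast

lemma W_subsp: "subsp F (W n)"
  unfolding subsp_def
proof (intro conjI ballI)
  show "0 \<in> W n" unfolding W_def using dval.w0[OF vdv] by simp
next
  fix a b assume a: "a \<in> W n" and b: "b \<in> W n"
  show "a + b \<in> W n" unfolding W_def
  proof (intro CollectI conjI ballI)
    show "a + b \<in> R0" using a b unfolding W_def by simp
  next
    fix i assume i: "i \<in> {1..r}"
    have "ereal (real (n i)) \<le> min (v i a) (v i b)" using a b i unfolding W_def by simp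
    also have "\<dots> \<le> v i (a + b)" using dval.wmin[OF vdv[OF i]] by simp
    finally show "ereal (real (n i)) \<le> v i (a + b)" .
  qed
next
  fix c a assume c: "c \<in> F" and a: "a \<in> W n"
  show "c * a \<in> W n" unfolding W_def
  proof (intro CollectI conjI ballI)
    show "c * a \<in> R0" using a c F_R0 unfolding W_def by auto
  next
    fix i assume i: "i \<in> {1..r}"
    have "0 + ereal (real (n i)) \<le> v i c + v i a" using a i R0_ge0[OF _ i, of c] c F_R0 unfolding W_def
      by (intro add_mono) auto
    then show "ereal (real (n i)) \<le> v i (c * a)" using dval.wmult[OF vdv[OF i]] by simp
  qed
qed

lemma W_mono: "W (m(i := Suc (m i))) \<subseteq> W m"
proof
  fix z assume z: "z \<in> W (m(i := Suc (m i)))"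
  show "z \<in> W m" unfolding W_def
  proof (intro CollectI conjI ballI)
    show "z \<in> R0" using z unfolding W_def by simp
  next
    fix j assume j: "j \<in> {1..r}"
    have "ereal (real ((m(i := Suc (m i))) j)) \<le> v j z" using z j unfolding W_def by blast
    moreover have "ereal (real (m j)) \<le> ereal (real ((m(i := Suc (m i))) j))" by simp
    ultimately show "ereal (real (m j)) \<le> v j z" by (rule order_trans[rotated])
  qed
qed

lemma ereal_pos_add: "0 \<le> (x::ereal) \<Longrightarrow> 0 < y \<Longrightarrow> 0 < x + y"
  by (cases x; cases y) auto

lemma step_main:
  assumes i: "i \<in> {1..r}" and z: "z \<in> W m" "v i z = ereal (real (m i))" and w: "w \<in> W m"
  shows "\<exists>c\<in>F. w - c * z \<in> W (m(i := Suc (m i)))"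
proof -
  obtain p q where p: "p \<in> B" "v i p = 1" "\<forall>j\<in>{1..r}-{i}. v j p = 0" "p * q = 1" using unif[OF i] by blast
  define P where "P = p ^ m i"
  define Pi where "Pi = q ^ m i"
  have PPi: "P * Pi = 1" unfolding P_def Pi_def by (metis p(4) power_mult_distrib power_one)
  have vq: "v j q = ereal (if j = i then -1 else 0)" if j: "j \<in> {1..r}" for j
  proof -
    have "v j q = - v j p" using dval.w_unit(2)[OF vdv[OF j] p(4)] .
    then show ?thesis using p j by (cases "j = i") (auto simp: one_ereal_def)
  qed
  have vPi: "v j Pi = ereal (if j = i then - real (m i) else 0)" if j: "j \<in> {1..r}" for j
    unfolding Pi_def using dval.w_pow_fin[OF vdv[OF j] vq[OF j]] by simp
  have vP: "v i P = ereal (real (m i))" unfolding P_def using dval.w_pow_fin[OF vdv[OF i], of p 1] p(2)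
    by (simp add: one_ereal_def)
  have zR: "z \<in> R0" and wR: "w \<in> R0" using z w unfolding W_def by auto
  define a where "a = w * Pi"
  define b where "b = z * Pi"
  have inB_shift: "x * Pi \<in> B" if x: "x \<in> W m" for x
    unfolding inB
  proof
    fix j assume j: "j \<in> {1..r}"
    have e: "v j (x * Pi) = v j x + v j Pi" using dval.wmult[OF vdv[OF j]] by simp
    show "0 \<le> v j (x * Pi)"
    proof (cases "j = i")
      case True
      then have "ereal (real (m i)) \<le> v i x" using x i unfolding W_def by blast
      then show ?thesis using e vPi[OF j] True ereal_ge_shift by simp
    next
      case False
      then show ?thesis using e vPi[OF j] R0_ge0[OF _ j, of x] x unfolding W_def by simp
    qed
  qed
  have aB: "a \<in> B" unfolding a_def using inB_shift[OF w] .
  have bB: "b \<in> B" unfolding b_def using inB_shift[OF z(1)] .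
  have vb: "v i b = 0" unfolding b_def using dval.wmult[OF vdv[OF i]] z(2) vPi[OF i] by simp
  obtain ca where ca: "ca \<in> F" "a - ca \<in> mm i" using res_deg1 i aB unfolding mm_def by blast
  obtain cb where cb: "cb \<in> F" "b - cb \<in> mm i" using res_deg1 i bB unfolding mm_def by blast
  have "cb \<noteq> 0" using cb vb by (auto simp: mm_iff)
  then obtain cbi where cbi: "cbi \<in> F" "cb * cbi = 1" using F_inv cb by blast
  define c where "c = ca * cbi"
  have cF: "c \<in> F" unfolding c_def using ca cbi by simp
  have eq1: "a - c * b = (a - ca) - c * (b - cb)"
  proof -
    have "c * cb = ca" unfolding c_def using cbi by (metis mult.assoc mult.commute mult_1_right)
    then show ?thesis by (simp add: algebra_simps)
  qed
  have "0 < v i (c * (b - cb))"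
  proof -
    have "v i (c * (b - cb)) = v i c + v i (b - cb)" using dval.wmult[OF vdv[OF i]] by simp
    moreover have "0 \<le> v i c" using R0_ge0[OF _ i] cF F_R0 by auto
    moreover have "0 < v i (b - cb)" using cb by (simp add: mm_iff)
    ultimately show ?thesis using ereal_pos_add by simp
  qed
  moreover have "0 < v i (a - ca)" using ca by (simp add: mm_iff)
  ultimately have "0 < min (v i (a - ca)) (v i (c * (b - cb)))" by simp
  also have "\<dots> \<le> v i (a - c * b)" unfolding eq1 using dval.w_diff[OF vdv[OF i]] by simp
  finally have pos: "0 < v i (a - c * b)" .
  have eq2: "w - c * z = (a - c * b) * P"
  proof -
    have "(a - c * b) * P = (w - c * z) * (P * Pi)" unfolding a_def b_def by (simp add: algebra_simps)
    then show ?thesis using PPi by simp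
  qed
  have "v i (w - c * z) = v i (a - c * b) + ereal (real (m i))"
    unfolding eq2 using dval.wmult[OF vdv[OF i]] vP by simp
  then have "ereal (real (m i)) < v i (w - c * z)" using pos by (cases "v i (a - c * b)") auto
  then have vi: "ereal (real (Suc (m i))) \<le> v i (w - c * z)" using dval.w_int_succ[OF vdv[OF i]] by blast
  have "w - c * z \<in> W (m(i := Suc (m i)))" unfolding W_def
  proof (intro CollectI conjI ballI)
    show "w - c * z \<in> R0" using wR zR cF F_R0 by auto
  next
    fix j assume j: "j \<in> {1..r}"
    show "ereal (real ((m(i := Suc (m i))) j)) \<le> v j (w - c * z)"
    proof (cases "j = i")
      case True then show ?thesis using vi by simp
    next
      case False
      have "0 + ereal (real (m j)) \<le> v j c + v j z" using z j R0_ge0[OF _ j, of c] cF F_R0 unfolding W_def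
        by (intro add_mono) auto
      then have "ereal (real (m j)) \<le> v j (c * z)" using dval.wmult[OF vdv[OF j]] by simp
      moreover have "ereal (real (m j)) \<le> v j w" using w j unfolding W_def by blast
      ultimately have "ereal (real (m j)) \<le> min (v j w) (v j (c * z))" by simp
      also have "\<dots> \<le> v j (w - c * z)" using dval.w_diff[OF vdv[OF j]] by simp
      finally show ?thesis using False by simp
    qed
  qed
  then show ?thesis using cF by blast
qed

lemma W_neq_iff: assumes i: "i \<in> {1..r}"
  shows "W (m(i := Suc (m i))) \<noteq> W m \<longleftrightarrow> (\<exists>z\<in>W m. v i z = ereal (real (m i)))"
proof
  assume "W (m(i := Suc (m i))) \<noteq> W m"
  then obtain z where z: "z \<in> W m" "z \<notin> W (m(i := Suc (m i)))" using W_mono by blast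
  have ge: "ereal (real (m i)) \<le> v i z" using z i unfolding W_def by blast
  have "\<not> ereal (real (Suc (m i))) \<le> v i z"
  proof
    assume h: "ereal (real (Suc (m i))) \<le> v i z"
    have "z \<in> W (m(i := Suc (m i)))" unfolding W_def
    proof (intro CollectI conjI ballI)
      show "z \<in> R0" using z unfolding W_def by simp
    next
      fix j assume j: "j \<in> {1..r}"
      show "ereal (real ((m(i := Suc (m i))) j)) \<le> v j z"
        using h z j unfolding W_def by (cases "j = i") auto
    qed
    then show False using z by simp
  qed
  then have "\<not> ereal (real (m i)) < v i z" using dval.w_int_succ[OF vdv[OF i]] by blast
  then show "\<exists>z\<in>W m. v i z = ereal (real (m i))" using ge z by (metis order_less_le)
next
  assume "\<exists>z\<in>W m. v i z = ereal (real (m i))"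
  then obtain z where z: "z \<in> W m" "v i z = ereal (real (m i))" by blast
  have "z \<notin> W (m(i := Suc (m i)))"
  proof
    assume "z \<in> W (m(i := Suc (m i)))"
    then have "ereal (real (Suc (m i))) \<le> v i z" using i unfolding W_def by fastforce
    then show False using z by simp
  qed
  then show "W (m(i := Suc (m i))) \<noteq> W m" using z by blast
qed

lemma step_gen: assumes i: "i \<in> {1..r}"
  shows "\<exists>z\<in>W m. \<forall>w\<in>W m. \<exists>c\<in>F. w - c * z \<in> W (m(i := Suc (m i)))"
proof (cases "\<exists>z\<in>W m. v i z = ereal (real (m i))")
  case True
  then obtain z where z: "z \<in> W m" "v i z = ereal (real (m i))" by blast
  then show ?thesis using step_main[OF i z] by blast
next
  case False
  then have "W (m(i := Suc (m i))) = W m" using W_neq_iff[OF i] by blast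
  moreover have "0 \<in> W m" using W_subsp unfolding subsp_def by blast
  ultimately show ?thesis by (intro bexI[of _ 0] ballI bexI[of _ 0]) auto
qed

lemma spans_exist: "\<exists>k b. spans F R0 (W m) k b"
proof (induction "sum m {1..r}" arbitrary: m)
  case 0
  then have "\<forall>i\<in>{1..r}. m i = 0" by simp
  then have "W m = R0" unfolding W_def using R0_ge0 by (auto simp: zero_ereal_def[symmetric])
  then have "spans F R0 (W m) 0 (\<lambda>_. 0)" unfolding spans_def by simp
  then show ?case by blast
next
  case (Suc s)
  then obtain i where i: "i \<in> {1..r}" "m i > 0" by (metis sum.neutral gr0I nat.distinct(1))
  define m' where "m' = m(i := m i - 1)"
  have mm': "m = m'(i := Suc (m' i))" unfolding m'_def using i by auto
  have "sum m' {1..r} = s"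
  proof -
    have "sum m {1..r} = m i + sum m ({1..r} - {i})" using i by (simp add: sum.remove)
    moreover have "sum m' {1..r} = m' i + sum m' ({1..r} - {i})" using i by (simp add: sum.remove)
    moreover have "sum m' ({1..r} - {i}) = sum m ({1..r} - {i})" unfolding m'_def by (intro sum.cong) auto
    ultimately show ?thesis using Suc(2) i unfolding m'_def by simp
  qed
  then obtain k b where kb: "spans F R0 (W m') k b" using Suc(1) by blast
  obtain z where z: "z \<in> W m'" "\<forall>w\<in>W m'. \<exists>c\<in>F. w - c * z \<in> W m" using step_gen[OF i(1), of m'] mm' by auto
  show ?case by (rule spans_ex_step[OF kb _ z(2)]) (use z W_R0 in blast)
qed

lemma dim_step: assumes i: "i \<in> {1..r}"
  shows "quot_dim F R0 (W (m(i := Suc (m i)))) =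
    quot_dim F R0 (W m) + (if \<exists>z\<in>W m. v i z = ereal (real (m i)) then 1 else 0)"
proof (cases "\<exists>z\<in>W m. v i z = ereal (real (m i))")
  case True
  then obtain z where z: "z \<in> W m" "v i z = ereal (real (m i))" by blast
  have zn: "z \<notin> W (m(i := Suc (m i)))"
  proof
    assume "z \<in> W (m(i := Suc (m i)))"
    then have "ereal (real (Suc (m i))) \<le> v i z" using i unfolding W_def by fastforce
    then show False using z by simp
  qed
  have "quot_dim F R0 (W (m(i := Suc (m i)))) = Suc (quot_dim F R0 (W m))"
    by (rule quot_dim_step[OF subF W_subsp W_subsp W_mono W_R0 z(1) zn]) (use step_main[OF i z] spans_exist in auto)
  then show ?thesis using True by simp
next
  case False
  then have "W (m(i := Suc (m i))) = W m" using W_neq_iff[OF i] by blast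
  then show ?thesis using False by simp
qed

end

context setting begin

abbreviation "S \<equiv> value_semigroup R0 r v"

lemma s_elem: "\<exists>s\<in>R0. \<forall>j\<in>{1..r}. 1 \<le> v j s \<and> v j s \<noteq> \<infinity>"
proof -
  obtain s where s: "s \<in> max_ideal R0" "nonzerodivisor_in R0 s"
    using O_CM by (auto simp: one_dim_CM_local_def)
  have sR: "s \<in> R0" using s by (simp add: max_ideal_def)
  obtain si where si: "s * si = 1" using nzd_inv s by blast
  have "1 \<le> v j s \<and> v j s \<noteq> \<infinity>" if j: "j \<in> {1..r}" for j
  proof
    show "v j s \<noteq> \<infinity>" using dval.w_unit(1)[OF vdv[OF j] si] .
    obtain c where c: "c \<in> F" "s - c \<in> mm j" using res_deg1 j R0_B sR unfolding mm_def by blast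
    have "c = 0"
    proof (rule ccontr)
      assume c0: "c \<noteq> 0"
      obtain c' where c': "c' \<in> F" "c * c' = 1" using F_inv c c0 by blast
      have scR: "s - c \<in> R0" using sR c F_R0 by auto
      have "s - c \<notin> units_in R0"
      proof
        assume "s - c \<in> units_in R0"
        then obtain y where y: "y \<in> R0" "(s - c) * y = 1" by (auto simp: units_in_def)
        have "v j (s - c) + v j y = 0" using dval.wmult[OF vdv[OF j], of "s - c" y] y dval.w1[OF vdv[OF j]] by simp
        moreover have "0 < v j (s - c)" using c by (simp add: mm_iff)
        moreover have "0 \<le> v j y" using R0_ge0[OF y(1) j] .
        ultimately show False using ereal_pos_add[of "v j y" "v j (s - c)"] by (simp add: add.commute)
      qed
      then have scM: "s - c \<in> max_ideal R0" using scR by (simp add: max_ideal_def)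
      have I1: "\<forall>a\<in>max_ideal R0. \<forall>b\<in>max_ideal R0. a + b \<in> max_ideal R0"
        and I2: "\<forall>a\<in>max_ideal R0. \<forall>t\<in>R0. t * a \<in> max_ideal R0"
        using max_ideal_ideal unfolding ideal_in_def by auto
      have m1: "(-1::'a) \<in> R0" by simp
      have "(-1) * (s - c) \<in> max_ideal R0" using bspec[OF bspec[OF I2 scM] m1] .
      then have "s + (-1) * (s - c) \<in> max_ideal R0" using I1 s(1) by blast
      then have "c \<in> max_ideal R0" by simp
      moreover have "c \<in> units_in R0" using c c' F_R0 by (auto simp: units_in_def)
      ultimately show False by (simp add: max_ideal_def)
    qed
    then have "0 < v j s" using c by (simp add: mm_iff)
    then have "ereal (real (Suc 0)) \<le> v j s" using dval.w_int_succ[OF vdv[OF j], of 0 s] by (simp add: zero_ereal_def)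
    then show "1 \<le> v j s" by (simp add: one_ereal_def)
  qed
  then show ?thesis using sR by blast
qed

definition nv :: "ereal \<Rightarrow> nat" where "nv x = nat \<lfloor>real_of_ereal x\<rfloor>"

lemma nv_eq: assumes j: "j \<in> {1..r}" and "0 \<le> v j x" "v j x \<noteq> \<infinity>"
  shows "v j x = ereal (real (nv (v j x)))"
proof -
  obtain k::int where k: "v j x = ereal (real_of_int k)" using dval.wint[OF vdv[OF j], of x] assms by auto
  then have "0 \<le> k" using assms by simp
  then show ?thesis using k by (simp add: nv_def)
qed

lemma realize:
  assumes z: "z \<in> R0" and A: "A \<subseteq> {1..r}"
    and hA: "\<forall>j\<in>A. v j z = ereal (real (\<beta> j))"
    and hB: "\<forall>j\<in>{1..r}-A. ereal (real (\<gamma> j)) \<le> v j z"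
  shows "\<exists>\<delta>\<in>S. (\<forall>j\<in>A. \<delta> j = \<beta> j) \<and> (\<forall>j\<in>{1..r}-A. \<gamma> j \<le> \<delta> j)"
proof -
  obtain s where s: "s \<in> R0" "\<forall>j\<in>{1..r}. 1 \<le> v j s \<and> v j s \<noteq> \<infinity>" using s_elem by blast
  define fv where "fv j = (if v j z = \<infinity> then 0 else nv (v j z))" for j
  define M where "M = Suc (\<Sum>j\<in>{1..r}. \<gamma> j + fv j)"
  define z' where "z' = z + s ^ M"
  have z'R: "z' \<in> R0" unfolding z'_def using z s by simp
  have key: "v j z' \<noteq> \<infinity> \<and> (v j z \<noteq> \<infinity> \<longrightarrow> v j z' = v j z) \<and> (j \<notin> A \<longrightarrow> ereal (real (\<gamma> j)) \<le> v j z')"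
    if j: "j \<in> {1..r}" for j
  proof -
    have "\<gamma> j + fv j \<le> (\<Sum>j\<in>{1..r}. \<gamma> j + fv j)"
      by (rule member_le_sum[of j "{1..r}" "\<lambda>j. \<gamma> j + fv j"]) (use j in auto)
    then have Mge: "\<gamma> j + fv j < M" unfolding M_def by simp
    obtain a where a: "v j s = ereal a" using s j dval.wminf[OF vdv[OF j], of s] by (cases "v j s") auto
    have "1 \<le> v j s" using s j by blast
    then have a1: "1 \<le> a" using a by (simp add: one_ereal_def)
    have vsM: "v j (s ^ M) = ereal (real M * a)" using dval.w_pow_fin[OF vdv[OF j] a] .
    have "real M * 1 \<le> real M * a" using a1 by (intro mult_left_mono) auto
    then have vsM_ge: "ereal (real M) \<le> v j (s ^ M)" using vsM by simp
    show ?thesis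
    proof (cases "v j z = \<infinity>")
      case True
      have e: "v j z' = v j (s ^ M)" unfolding z'_def using dval.w_strict[OF vdv[OF j], of "s ^ M" z] True vsM
        by (simp add: add.commute)
      have "ereal (real (\<gamma> j)) \<le> ereal (real M)" using Mge by simp
      then have "ereal (real (\<gamma> j)) \<le> v j z'" using e order_trans[OF _ vsM_ge] by simp
      moreover have "v j z' \<noteq> \<infinity>" using e vsM by simp
      ultimately show ?thesis using True by simp
    next
      case False
      have vz: "v j z = ereal (real (fv j))" unfolding fv_def using nv_eq[OF j R0_ge0[OF z j] False] False by simp
      have "ereal (real (fv j)) < ereal (real M)" using Mge by simp
      then have lt: "v j z < v j (s ^ M)" using vz order_less_le_trans[OF _ vsM_ge] by simp
      then have e: "v j z' = v j z" unfolding z'_def using dval.w_strict[OF vdv[OF j]] by simp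
      have "j \<notin> A \<longrightarrow> ereal (real (\<gamma> j)) \<le> v j z" using hB j by blast
      then show ?thesis using e False by simp
    qed
  qed
  define \<delta> where "\<delta> j = (if j \<in> {1..r} then nv (v j z') else 0)" for j
  have vd: "v j z' = ereal (real (\<delta> j))" if j: "j \<in> {1..r}" for j
    unfolding \<delta>_def using j nv_eq[OF j R0_ge0[OF z'R j]] key[OF j] by simp
  have "z' \<noteq> 0"
  proof
    assume "z' = 0"
    then have "v 1 z' = \<infinity>" using dval.w0[OF vdv, of 1] r2 by simp
    then show False using key[of 1] r2 by simp
  qed
  then have dS: "\<delta> \<in> S" unfolding value_semigroup_def vecs_def using z'R vd by (auto simp: \<delta>_def)
  have "\<forall>j\<in>A. \<delta> j = \<beta> j"
  proof
    fix j assume jA: "j \<in> A"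
    then have j: "j \<in> {1..r}" using A by blast
    have "v j z' = ereal (real (\<beta> j))" using key[OF j] hA jA by simp
    then show "\<delta> j = \<beta> j" using vd[OF j] by simp
  qed
  moreover have "\<forall>j\<in>{1..r}-A. \<gamma> j \<le> \<delta> j"
  proof
    fix j assume j: "j \<in> {1..r}-A"
    then have "j \<in> {1..r}" "j \<notin> A" by auto
    then have "ereal (real (\<gamma> j)) \<le> ereal (real (\<delta> j))" using key vd by simp
    then show "\<gamma> j \<le> \<delta> j" by simp
  qed
  ultimately show ?thesis using dS by blast
qed

end

context setting begin

lemma S_elem: "\<beta> \<in> S \<Longrightarrow> \<exists>z\<in>R0. z \<noteq> 0 \<and> (\<forall>j\<in>{1..r}. v j z = ereal (real (\<beta> j)))"
  unfolding value_semigroup_def by blast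

lemma vcw: "c \<in> F \<Longrightarrow> c \<noteq> 0 \<Longrightarrow> j \<in> {1..r} \<Longrightarrow> v j (c * w) = v j w"
  using vF0 dval.wmult[OF vdv] by simp

lemma combine:
  assumes J1: "J1 \<subseteq> {1..r}" and J2: "J2 \<subseteq> {1..r}"
    and b: "\<beta> \<in> Delta R0 r v J1 n" and g: "\<gamma> \<in> Delta R0 r v J2 n"
    and cardc: "card (J1 \<inter> J2) + 1 < card F"
  shows "Delta R0 r v (J1 \<union> J2) n \<noteq> {}"
proof -
  have bS: "\<beta> \<in> S" "\<forall>i\<in>J1. \<beta> i = n i" "\<forall>t\<in>{1..r}-J1. n t < \<beta> t" using b unfolding Delta_def by auto
  have gS: "\<gamma> \<in> S" "\<forall>i\<in>J2. \<gamma> i = n i" "\<forall>t\<in>{1..r}-J2. n t < \<gamma> t" using g unfolding Delta_def by auto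
  obtain z where z: "z \<in> R0" "\<forall>j\<in>{1..r}. v j z = ereal (real (\<beta> j))" using S_elem[OF bS(1)] by blast
  obtain w where w: "w \<in> R0" "\<forall>j\<in>{1..r}. v j w = ereal (real (\<gamma> j))" using S_elem[OF gS(1)] by blast
  define Bad where "Bad i = {c \<in> F. ereal (real (n i)) < v i (z + c * w)}" for i
  have bad1: "card (Bad i) \<le> 1" if i: "i \<in> J1 \<inter> J2" for i
  proof -
    have iI: "i \<in> {1..r}" using i J1 by auto
    have fin: "finite (Bad i)" unfolding Bad_def using Ffin by simp
    have "\<forall>c1\<in>Bad i. \<forall>c2\<in>Bad i. c1 = c2"
    proof (intro ballI, rule ccontr)
      fix c1 c2 assume c1: "c1 \<in> Bad i" and c2: "c2 \<in> Bad i" and ne: "c1 \<noteq> c2"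
      have dF: "c1 - c2 \<in> F" using c1 c2 unfolding Bad_def by simp
      have v1: "v i ((c1 - c2) * w) = ereal (real (n i))" using vcw[OF dF _ iI] ne w iI gS i by simp
      have eq: "(z + c1 * w) - (z + c2 * w) = (c1 - c2) * w" by (simp add: algebra_simps)
      have lt: "ereal (real (n i)) < min (v i (z + c1 * w)) (v i (z + c2 * w))" using c1 c2 unfolding Bad_def by simp
      have le: "min (v i (z + c1 * w)) (v i (z + c2 * w)) \<le> v i ((z + c1 * w) - (z + c2 * w))"
        using dval.w_diff[OF vdv[OF iI]] .
      have "ereal (real (n i)) < v i ((z + c1 * w) - (z + c2 * w))" using order_less_le_trans[OF lt le] .
      then show False unfolding eq v1 by simp
    qed
    then show ?thesis using fin by (simp add: card_le_Suc0_iff_eq)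
  qed
  define X where "X = insert 0 (\<Union>i\<in>J1 \<inter> J2. Bad i)"
  have XF: "X \<subseteq> F" unfolding X_def Bad_def by auto
  have finJ: "finite (J1 \<inter> J2)" using J1 finite_subset by blast
  have "card (\<Union>i\<in>J1 \<inter> J2. Bad i) \<le> (\<Sum>i\<in>J1 \<inter> J2. card (Bad i))" by (rule card_UN_le[OF finJ])
  also have "\<dots> \<le> of_nat (card (J1 \<inter> J2)) * 1" by (rule sum_bounded_above) (use bad1 in auto)
  finally have cU: "card (\<Union>i\<in>J1 \<inter> J2. Bad i) \<le> card (J1 \<inter> J2)" by simp
  have finU: "finite (\<Union>i\<in>J1 \<inter> J2. Bad i)" using finite_subset[OF _ Ffin] XF unfolding X_def by blast
  have "card X \<le> Suc (card (\<Union>i\<in>J1 \<inter> J2. Bad i))" unfolding X_def using finU by (simp add: card_insert_if)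
  then have cX: "card X \<le> card (J1 \<inter> J2) + 1" using cU by simp
  have "\<not> F \<subseteq> X"
  proof
    assume "F \<subseteq> X"
    then have "F = X" using XF by blast
    then show False using cX cardc by simp
  qed
  then obtain c where c: "c \<in> F" "c \<notin> X" by blast
  have c0: "c \<noteq> 0" using c unfolding X_def by auto
  define x where "x = z + c * w"
  have xR: "x \<in> R0" unfolding x_def using z w c F_R0 by auto
  have vcw': "v j (c * w) = ereal (real (\<gamma> j))" if "j \<in> {1..r}" for j using vcw[OF c(1) c0 that] w that by simp
  have A: "\<forall>j\<in>J1 \<union> J2. v j x = ereal (real (n j))"
  proof
    fix j assume j: "j \<in> J1 \<union> J2"
    then have jI: "j \<in> {1..r}" using J1 J2 by auto
    show "v j x = ereal (real (n j))"
    proof (cases "j \<in> J1 \<inter> J2")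
      case True
      have "ereal (real (n j)) \<le> min (v j z) (v j (c * w))" using z w bS gS True jI vcw' by simp
      also have "\<dots> \<le> v j x" unfolding x_def using dval.wmin[OF vdv[OF jI]] .
      finally have ge: "ereal (real (n j)) \<le> v j x" .
      have "c \<notin> Bad j" using c True unfolding X_def by blast
      then have "\<not> ereal (real (n j)) < v j x" using c unfolding Bad_def x_def by simp
      then show ?thesis using ge by simp
    next
      case False
      show ?thesis
      proof (cases "j \<in> J1")
        case True
        then have "j \<notin> J2" using False by blast
        then have "v j z < v j (c * w)" using z w bS gS True jI vcw' by simp
        then show ?thesis unfolding x_def using dval.w_strict[OF vdv[OF jI]] z jI bS True by simp
      next
        case False2: False
        then have "j \<in> J2" using j by blast
        then have "v j (c * w) < v j z" using z w bS gS False2 jI vcw' by simp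
        then show ?thesis unfolding x_def using dval.w_strict[OF vdv[OF jI], of "c * w" z] vcw'[OF jI] gS \<open>j \<in> J2\<close>
          by (simp add: add.commute)
      qed
    qed
  qed
  have Bp: "\<forall>j\<in>{1..r} - (J1 \<union> J2). ereal (real (Suc (n j))) \<le> v j x"
  proof
    fix j assume j: "j \<in> {1..r} - (J1 \<union> J2)"
    then have jI: "j \<in> {1..r}" by simp
    have "n j < \<beta> j" "n j < \<gamma> j" using bS(3) gS(3) j by auto
    then have "Suc (n j) \<le> \<beta> j" "Suc (n j) \<le> \<gamma> j" by auto
    then have "ereal (real (Suc (n j))) \<le> min (v j z) (v j (c * w))" using z w jI vcw' by simp
    also have "\<dots> \<le> v j x" unfolding x_def using dval.wmin[OF vdv[OF jI]] .
    finally show "ereal (real (Suc (n j))) \<le> v j x" .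
  qed
  obtain \<delta> where d: "\<delta> \<in> S" "\<forall>j\<in>J1 \<union> J2. \<delta> j = n j" "\<forall>j\<in>{1..r} - (J1 \<union> J2). Suc (n j) \<le> \<delta> j"
    using realize[OF xR _ A Bp] J1 J2 by blast
  then have "\<delta> \<in> Delta R0 r v (J1 \<union> J2) n" unfolding Delta_def by (auto simp: Suc_le_eq)
  then show ?thesis by blast
qed

end

locale kset = setting +
  fixes xs n :: "nat \<Rightarrow> nat"
  assumes kind: "of_kind R0 r v xs n"
    and xs01: "\<forall>j\<in>{2..r-1}. xs j \<in> {0, 1}"
begin

lemma maxp: "maximal_point R0 r v n" using kind by (simp add: of_kind_def)
lemma nS: "n \<in> S" using maxp by (simp add: maximal_point_def)
lemma Delta1: "i \<in> {1..r} \<Longrightarrow> Delta R0 r v {i} n = {}" using maxp by (simp add: maximal_point_def)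

lemma kind_j: "j \<in> {2..r-1} \<Longrightarrow> (xs j = 0 \<and> (\<forall>J. J \<subset> {1..r} \<and> card J = j \<longrightarrow> Delta R0 r v J n = {}))
      \<or> (xs j = 1 \<and> (\<forall>J. J \<subset> {1..r} \<and> card J = j \<longrightarrow> Delta R0 r v J n \<noteq> {}))"
  using kind by (simp add: of_kind_def)

lemma kind_one: assumes "j \<in> {2..r-1}" "xs j = 1" "J \<subset> {1..r}" "card J = j" shows "Delta R0 r v J n \<noteq> {}"
proof -
  from kind_j[OF assms(1)] show ?thesis
  proof (elim disjE conjE)
    assume "xs j = 0" then show ?thesis using assms(2) by simp
  next
    assume "\<forall>J. J \<subset> {1..r} \<and> card J = j \<longrightarrow> Delta R0 r v J n \<noteq> {}"
    then show ?thesis using assms(3,4) by blast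
  qed
qed

lemma kind_zero: assumes "j \<in> {2..r-1}" "J \<subset> {1..r}" "card J = j" "Delta R0 r v J n \<noteq> {}" shows "xs j = 1"
proof -
  from kind_j[OF assms(1)] show ?thesis
  proof (elim disjE conjE)
    assume "\<forall>J. J \<subset> {1..r} \<and> card J = j \<longrightarrow> Delta R0 r v J n = {}"
    then show ?thesis using assms(2,3,4) by blast
  qed
qed

lemma kind_up: assumes j: "2 \<le> j" "Suc j \<le> r - 1" and xj: "xs j = 1" shows "xs (Suc j) = 1"
proof (rule kind_zero[of _ "{1..Suc j}"])
  show "Suc j \<in> {2..r-1}" using j by simp
  show "{1..Suc j} \<subset> {1..r}" using j by auto
  show "card {1..Suc j} = Suc j" by simp
  have jr: "j \<in> {2..r-1}" using j by simp
  have D1: "Delta R0 r v {2..Suc j} n \<noteq> {}"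
    by (rule kind_one[OF jr xj]) (use j in auto)
  have D2: "Delta R0 r v {1..j} n \<noteq> {}"
    by (rule kind_one[OF jr xj]) (use j in auto)
  obtain b where b: "b \<in> Delta R0 r v {2..Suc j} n" using D1 by blast
  obtain g where g: "g \<in> Delta R0 r v {1..j} n" using D2 by blast
  have "card ({2..Suc j} \<inter> {1..j}) + 1 < card F"
  proof -
    have "{2..Suc j} \<inter> {1..j} = {2..j}" by auto
    then have "card ({2..Suc j} \<inter> {1..j}) + 1 = j" using j by simp
    then show ?thesis using j q_ge by simp
  qed
  then have "Delta R0 r v ({2..Suc j} \<union> {1..j}) n \<noteq> {}"
    by (intro combine[OF _ _ b g]) (use j in auto)
  moreover have "{2..Suc j} \<union> {1..j} = {1..Suc j}" using j by auto
  ultimately show "Delta R0 r v {1..Suc j} n \<noteq> {}" by simp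
qed

lemma kind_up_iter: assumes j: "2 \<le> j" "j \<le> j'" "j' \<le> r - 1" and xj: "xs j = 1" shows "xs j' = 1"
  using j(2,3)
proof (induction j' rule: dec_induct)
  case base then show ?case using xj by simp
next
  case (step m) then show ?case using kind_up[of m] j by simp
qed

definition Inc :: "nat \<Rightarrow> bool" where
  "Inc k \<longleftrightarrow> (\<exists>\<beta>\<in>S. (\<forall>j\<in>{1..r}. j < k \<longrightarrow> n j < \<beta> j) \<and> \<beta> k = n k \<and> (\<forall>j\<in>{1..r}. k < j \<longrightarrow> n j \<le> \<beta> j))"

lemma e_first_upd: assumes k: "1 \<le> k"
  shows "(\<lambda>i. n i + e_first k i) = (\<lambda>i. n i + e_first (k - 1) i)(k := Suc (n k + e_first (k - 1) k))"
proof (rule ext)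
  fix i show "n i + e_first k i = ((\<lambda>i. n i + e_first (k - 1) i)(k := Suc (n k + e_first (k - 1) k))) i"
    using k by (cases "i = k") (auto simp: e_first_def)
qed

lemma Inc_iff: assumes k: "k \<in> {1..r}"
  shows "(\<exists>z\<in>W (\<lambda>i. n i + e_first (k - 1) i). v k z = ereal (real (n k + e_first (k - 1) k))) \<longleftrightarrow> Inc k"
proof
  have "\<not> k \<le> k - 1" using k by auto
  then have ef: "e_first (k - 1) k = 0" by (simp add: e_first_def)
  assume "\<exists>z\<in>W (\<lambda>i. n i + e_first (k - 1) i). v k z = ereal (real (n k + e_first (k - 1) k))"
  then obtain z where z: "z \<in> W (\<lambda>i. n i + e_first (k - 1) i)" "v k z = ereal (real (n k))"
    using ef by auto
  have zR: "z \<in> R0" using z unfolding W_def by simp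
  have hB: "\<forall>j\<in>{1..r}-{k}. ereal (real (n j + e_first (k - 1) j)) \<le> v j z" using z unfolding W_def by auto
  obtain \<delta> where d: "\<delta> \<in> S" "\<forall>j\<in>{k}. \<delta> j = n j" "\<forall>j\<in>{1..r}-{k}. n j + e_first (k - 1) j \<le> \<delta> j"
    using realize[OF zR _ _ hB, of n] k z by auto
  have "\<forall>j\<in>{1..r}. j < k \<longrightarrow> n j < \<delta> j"
  proof (intro ballI impI)
    fix j assume j: "j \<in> {1..r}" "j < k"
    then have "j \<in> {1..r}-{k}" by auto
    then have "n j + e_first (k - 1) j \<le> \<delta> j" using d(3) by blast
    moreover have "e_first (k - 1) j = 1" using j by (simp add: e_first_def)
    ultimately show "n j < \<delta> j" by simp
  qed
  moreover have "\<forall>j\<in>{1..r}. k < j \<longrightarrow> n j \<le> \<delta> j"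
  proof (intro ballI impI)
    fix j assume j: "j \<in> {1..r}" "k < j"
    then have "j \<in> {1..r}-{k}" by auto
    then have "n j + e_first (k - 1) j \<le> \<delta> j" using d(3) by blast
    then show "n j \<le> \<delta> j" by simp
  qed
  ultimately show "Inc k" unfolding Inc_def using d by auto
next
  assume "Inc k"
  then obtain \<beta> where b: "\<beta> \<in> S" "\<forall>j\<in>{1..r}. j < k \<longrightarrow> n j < \<beta> j" "\<beta> k = n k" "\<forall>j\<in>{1..r}. k < j \<longrightarrow> n j \<le> \<beta> j"
    unfolding Inc_def by blast
  obtain z where z: "z \<in> R0" "\<forall>j\<in>{1..r}. v j z = ereal (real (\<beta> j))" using S_elem[OF b(1)] by blast
  have "z \<in> W (\<lambda>i. n i + e_first (k - 1) i)" unfolding W_def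
  proof (intro CollectI conjI ballI z(1))
    fix j assume j: "j \<in> {1..r}"
    have "n j + e_first (k - 1) j \<le> \<beta> j"
    proof (cases "j < k")
      case True then show ?thesis using b(2) j by (auto simp: e_first_def)
    next
      case False
      then show ?thesis using b(3,4) j by (cases "j = k") (auto simp: e_first_def)
    qed
    then show "ereal (real (n j + e_first (k - 1) j)) \<le> v j z" using z j by simp
  qed
  moreover have "\<not> k \<le> k - 1" using k by auto
  then have "e_first (k - 1) k = 0" by (simp add: e_first_def)
  then have "v k z = ereal (real (n k + e_first (k - 1) k))" using z k b(3) by simp
  ultimately show "\<exists>z\<in>W (\<lambda>i. n i + e_first (k - 1) i). v k z = ereal (real (n k + e_first (k - 1) k))" by blast
qed

lemma dstep: assumes k: "k \<in> {1..r}"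
  shows "ell R0 F r v (\<lambda>i. n i + e_first k i) = ell R0 F r v (\<lambda>i. n i + e_first (k - 1) i) + (if Inc k then 1 else 0)"
proof -
  have "ell R0 F r v (\<lambda>i. n i + e_first k i) = quot_dim F R0 (W ((\<lambda>i. n i + e_first (k - 1) i)(k := Suc (n k + e_first (k - 1) k))))"
    unfolding ell_W using e_first_upd[of k] k by simp
  also have "\<dots> = quot_dim F R0 (W (\<lambda>i. n i + e_first (k - 1) i)) + (if Inc k then 1 else 0)"
    using dim_step[OF k, of "\<lambda>i. n i + e_first (k - 1) i"] Inc_iff[OF k] by simp
  finally show ?thesis unfolding ell_W .
qed

lemma dsum: "h \<le> r \<Longrightarrow> ell R0 F r v (\<lambda>i. n i + e_first h i) = ell R0 F r v n + card {k\<in>{1..h}. Inc k}"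
proof (induction h)
  case 0
  have "(\<lambda>i. n i + e_first 0 i) = n" by (auto simp: e_first_def)
  then show ?case by simp
next
  case (Suc h)
  have "{k\<in>{1..Suc h}. Inc k} = {k\<in>{1..h}. Inc k} \<union> (if Inc (Suc h) then {Suc h} else {})"
    by (auto simp: le_Suc_eq)
  then have c: "card {k\<in>{1..Suc h}. Inc k} = card {k\<in>{1..h}. Inc k} + (if Inc (Suc h) then 1 else 0)" by auto
  show ?case using dstep[of "Suc h"] Suc c by simp
qed

lemma Inc1: "Inc 1"
  unfolding Inc_def using nS by auto

lemma Inc_k: assumes k: "2 \<le> k" "k \<le> r" shows "Inc k \<longleftrightarrow> (k \<le> r - 1 \<and> xs (r + 1 - k) = 1)"
proof
  assume "Inc k"
  then obtain \<beta> where b: "\<beta> \<in> S" "\<forall>j\<in>{1..r}. j < k \<longrightarrow> n j < \<beta> j" "\<beta> k = n k" "\<forall>j\<in>{1..r}. k < j \<longrightarrow> n j \<le> \<beta> j"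
    unfolding Inc_def by blast
  define J where "J = {j\<in>{1..r}. \<beta> j = n j}"
  have kJ: "k \<in> J" unfolding J_def using k b by auto
  have Jsub: "J \<subseteq> {k..r}"
  proof
    fix j assume "j \<in> J"
    then show "j \<in> {k..r}" using b(2) unfolding J_def by (cases "j < k") auto
  qed
  have Jpsub: "J \<subset> {1..r}" using Jsub k unfolding J_def by auto
  have bD: "\<beta> \<in> Delta R0 r v J n" unfolding Delta_def
  proof (intro CollectI conjI ballI b(1))
    fix i assume "i \<in> J" then show "\<beta> i = n i" unfolding J_def by simp
  next
    fix t assume t: "t \<in> {1..r} - J"
    show "n t < \<beta> t"
    proof (cases "t < k")
      case True then show ?thesis using b(2) t by auto
    next
      case False
      then have "k < t" using t kJ by (cases "t = k") auto
      then show ?thesis using b(4) t unfolding J_def by fastforce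
    qed
  qed
  have finJ: "finite J" using Jsub finite_subset by blast
  have cle: "card J \<le> r + 1 - k" using card_mono[OF _ Jsub] by simp
  have "card J \<noteq> 1"
  proof
    assume "card J = 1"
    then obtain a where "J = {a}" by (metis card_1_singletonE)
    then have "J = {k}" using kJ by simp
    then show False using bD Delta1 k by auto
  qed
  moreover have "card J \<noteq> 0" using finJ kJ by auto
  ultimately have c2: "2 \<le> card J" by simp
  have cJ: "card J \<in> {2..r-1}" using c2 cle k by simp
  have "xs (card J) = 1" by (rule kind_zero[OF cJ Jpsub refl]) (use bD in blast)
  moreover have "k \<le> r - 1" using c2 cle by simp
  ultimately show "k \<le> r - 1 \<and> xs (r + 1 - k) = 1" using kind_up_iter[of "card J" "r + 1 - k"] c2 cle k by simp
next
  assume h: "k \<le> r - 1 \<and> xs (r + 1 - k) = 1"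
  have jr: "r + 1 - k \<in> {2..r-1}" using h k by auto
  have "Delta R0 r v {k..r} n \<noteq> {}" by (rule kind_one[OF jr]) (use h k in auto)
  then obtain \<beta> where b: "\<beta> \<in> Delta R0 r v {k..r} n" by blast
  then have bD: "\<beta> \<in> S" "\<forall>i\<in>{k..r}. \<beta> i = n i" "\<forall>t\<in>{1..r}-{k..r}. n t < \<beta> t"
    unfolding Delta_def by auto
  show "Inc k" unfolding Inc_def
  proof (rule bexI[OF _ bD(1)], intro conjI ballI impI)
    fix j assume "j \<in> {1..r}" "j < k" then show "n j < \<beta> j" using bD(3) by auto
  next
    show "\<beta> k = n k" using bD(2) k by auto
  next
    fix j assume "j \<in> {1..r}" "k < j" then show "n j \<le> \<beta> j" using bD(2) by auto
  qed
qed

lemma x_iff: assumes k: "2 \<le> k" "k \<le> r"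
  shows "(k \<le> r - 1 \<and> xs (r + 1 - k) = 1) \<longleftrightarrow> k \<le> sum xs {2..r-1} + 1"
proof
  assume h: "k \<le> r - 1 \<and> xs (r + 1 - k) = 1"
  have "(\<Sum>j\<in>{2..r-1}. if r + 1 - k \<le> j then 1 else 0) \<le> sum xs {2..r-1}"
  proof (rule sum_mono)
    fix j assume j: "j \<in> {2..r-1}"
    show "(if r + 1 - k \<le> j then 1 else 0) \<le> xs j"
      using kind_up_iter[of "r + 1 - k" j] h j k by auto
  qed
  moreover have "(\<Sum>j\<in>{2..r-1}. if r + 1 - k \<le> j then 1 else (0::nat)) = card {r + 1 - k..r - 1}"
  proof -
    have "(\<Sum>j\<in>{2..r-1}. if r + 1 - k \<le> j then 1 else (0::nat)) = sum (\<lambda>_. 1) {j\<in>{2..r-1}. r + 1 - k \<le> j}"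
      by (rule sum.inter_filter[symmetric]) simp
    also have "\<dots> = card {j\<in>{2..r-1}. r + 1 - k \<le> j}" by simp
    also have "{j\<in>{2..r-1}. r + 1 - k \<le> j} = {r + 1 - k..r - 1}" using h k by auto
    finally show ?thesis .
  qed
  ultimately show "k \<le> sum xs {2..r-1} + 1" using h k by simp
next
  assume h: "k \<le> sum xs {2..r-1} + 1"
  show "k \<le> r - 1 \<and> xs (r + 1 - k) = 1"
  proof (rule ccontr)
    assume nh: "\<not> (k \<le> r - 1 \<and> xs (r + 1 - k) = 1)"
    have "sum xs {2..r-1} \<le> (\<Sum>j\<in>{2..r-1}. if r + 2 - k \<le> j then 1 else 0)"
    proof (rule sum_mono)
      fix j assume j: "j \<in> {2..r-1}"
      have "xs j \<in> {0, 1}" using xs01 j by blast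
      then have "xs j \<le> 1" by auto
      moreover have "xs j = 0" if "j < r + 2 - k"
      proof -
        have "xs j \<noteq> 1"
        proof
          assume "xs j = 1"
          then have "k \<le> r - 1" "xs (r + 1 - k) = 1"
            using kind_up_iter[of j "r + 1 - k"] j that k by auto
          then show False using nh by simp
        qed
        then show ?thesis using xs01 j by auto
      qed
      ultimately show "xs j \<le> (if r + 2 - k \<le> j then 1 else 0)" by auto
    qed
    also have "(\<Sum>j\<in>{2..r-1}. if r + 2 - k \<le> j then 1 else (0::nat)) = card {r + 2 - k..r - 1}"
    proof -
      have "(\<Sum>j\<in>{2..r-1}. if r + 2 - k \<le> j then 1 else (0::nat)) = sum (\<lambda>_. 1) {j\<in>{2..r-1}. r + 2 - k \<le> j}"
        by (rule sum.inter_filter[symmetric]) simp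
      also have "\<dots> = card {j\<in>{2..r-1}. r + 2 - k \<le> j}" by simp
      also have "{j\<in>{2..r-1}. r + 2 - k \<le> j} = {r + 2 - k..r - 1}" using k by auto
      finally show ?thesis .
    qed
    finally show False using h k by simp
  qed
qed

lemma Inc_x: assumes k: "k \<in> {1..r}" shows "Inc k \<longleftrightarrow> k \<le> sum xs {2..r-1} + 1"
proof (cases "k = 1")
  case True then show ?thesis using Inc1 by simp
next
  case False
  then have "2 \<le> k" "k \<le> r" using k by auto
  then show ?thesis using Inc_k x_iff by simp
qed

lemma result: assumes h: "h \<in> {1..r}"
  shows "dh R0 F r v h n = (if h \<le> sum xs {2..r-1} + 1 then int h else int (sum xs {2..r-1} + 1))"
proof -
  have "{k\<in>{1..h}. Inc k} = {k\<in>{1..h}. k \<le> sum xs {2..r-1} + 1}" using Inc_x h by auto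
  also have "\<dots> = {1..min h (sum xs {2..r-1} + 1)}" by auto
  finally have "card {k\<in>{1..h}. Inc k} = min h (sum xs {2..r-1} + 1)" by simp
  then show ?thesis unfolding dh_def using dsum[of h] h by auto
qed

end

theorem mainTheorem3:
  fixes R0 F :: "'a::comm_ring_1 set"
    and v :: "nat \<Rightarrow> 'a \<Rightarrow> ereal"
    and r q :: nat
    and xs n :: "nat \<Rightarrow> nat"
  assumes O_CM: "one_dim_CM_local R0"
    and K_frac: "total_ring_of_fractions R0"
    and coeff: "coefficient_field R0 F"
    and F_card: "finite F" "card F = q"
    and q_ge: "r \<le> q"
    and Ob_finite: "finite_over R0 (int_closure R0)"
    and vals: "\<forall>i\<in>{1..r}. discrete_valuation (v i)"
    and Ob_inter: "int_closure R0 = (\<Inter>i\<in>{1..r}. val_ring (v i))"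
    and distinct_max: "\<forall>i\<in>{1..r}. \<forall>j\<in>{1..r}. i \<noteq> j \<longrightarrow>
                          val_max (int_closure R0) (v i) \<noteq> val_max (int_closure R0) (v j)"
    and res_deg1: "\<forall>i\<in>{1..r}. \<forall>z\<in>int_closure R0. \<exists>c\<in>F. z - c \<in> val_max (int_closure R0) (v i)"
    and xs01: "\<forall>j\<in>{2..r-1}. xs j \<in> {0, 1}"
    and kind: "of_kind R0 r v xs n"
  shows "\<forall>h\<in>{1..r}. dh R0 F r v h n =
           (if h \<le> (\<Sum>j=2..r-1. xs j) + 1 then int h else int ((\<Sum>j=2..r-1. xs j) + 1))"
proof -
  consider "r = 0" | "r = 1" | "2 \<le> r" by linarith
  then show ?thesis
  proof cases
    case 1 then show ?thesis by simp
  next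
    case 2
    have mp: "maximal_point R0 r v n" using kind by (simp add: of_kind_def)
    then have nS: "n \<in> value_semigroup R0 r v" and D: "Delta R0 r v {1} n = {}"
      using 2 by (auto simp: maximal_point_def)
    have "n \<in> Delta R0 r v {1} n" unfolding Delta_def using nS 2 by auto
    then show ?thesis using D by simp
  next
    case 3
    have rq: "r \<le> card F" using F_card q_ge by simp
    have "kset R0 F v r xs n"
      unfolding kset_def kset_axioms_def setting_def
      using O_CM K_frac coeff F_card(1) rq Ob_finite vals Ob_inter distinct_max res_deg1 3 kind xs01
      by blast
    then interpret kset R0 F v r xs n .
    show ?thesis using result by blast
  qed
qed

end
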